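(* Let $X$ be a countable Markov shift over the alphabet $\mathbb N$, $\phi\colon X\to\mathbb R$ a measurable function and $\mu_\phi$ a Gibbs state for $\phi$ with constants $c_0\ge1$, $P\in\mathbb R$. Let $l\ge1$ be an integer, $\varphi_j\colon X\to\mathbb R$ continuous and $\alpha_j\in\mathbb R$ for $j=1,\dots,l$. Then there exists $n_1>1$ such that the following holds: for every integer $n\ge n_1$, every $a\in\mathbb N$ and every finite subset $G^n\subset E^n(a,a)$ with $\inf_{[G^n]}S_{n-1}\varphi_j>\alpha_j(n-1)$ for $j=1,\dots,l$, there exists a $\sigma$-invariant measure $\mu\in\mathcal M$ supported on a compact set such that $$\log\mu_\phi[G^n]\le F(\mu)(n-1)+\log c_0\quad\text{and}\quad\int\varphi_j\,d\mu>\alpha_j\ \text{for } j=1,\dots,l.$$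
   Context: $\mathbb N=\{0,1,\dots\}$; $A$ is a 0-1 matrix indexed by $\mathbb N$ without zero rows or columns; $X=\{x\in\mathbb N^{\mathbb N}:A_{x_ix_{i+1}}=1\ \forall i\}$ with product topology and left shift $\sigma$. $E^n$ is the set of admissible strings of length $n$, $E^n(a,b)=\{w\in E^n:w_0=a,\ w_{n-1}=b\}$, $[w]$ the cylinder of $w$, and $[W]=\bigcup_{w\in W}[w]$. $S_n\varphi=\sum_{i<n}\varphi\circ\sigma^i$. Gibbs state: $c_0^{-1}\le\mu_\phi[x_0,\dots,x_{n-1}]/\exp(-Pn+S_n\phi(x))\le c_0$ for all $n\ge1$, $x\in X$. $\mathcal M$: Borel probability measures on $X$. $h$: Kolmogorov–Sinai entropy w.r.t. $\sigma$; $\sup\phi<\infty$ for such $\phi$; $\mathcal M_\phi(\sigma)$ is the set of $\sigma$-invariant $\nu\in\mathcal M$ with $\int\phi\,d\nu>-\infty$; $F(\nu)=-P+h(\nu)+\int\phi\,d\nu$ for $\nu\in\mathcal M_\phi(\sigma)$ and $F(\nu)=-\infty$ otherwise. *)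

theory Defs
  imports "HOL-Probability.Probability"
begin

(* Countable Markov shift over the alphabet nat with 0-1 transition matrix A
   (A i j = True means the (i,j) entry is 1). *)

definition no_zero_rows_cols :: "(nat \<Rightarrow> nat \<Rightarrow> bool) \<Rightarrow> bool" where
  "no_zero_rows_cols A \<longleftrightarrow> (\<forall>i. \<exists>j. A i j) \<and> (\<forall>j. \<exists>i. A i j)"

definition shift_space :: "(nat \<Rightarrow> nat \<Rightarrow> bool) \<Rightarrow> (nat \<Rightarrow> nat) set" where
  "shift_space A = {x. \<forall>i. A (x i) (x (Suc i))}"

definition shift :: "(nat \<Rightarrow> nat) \<Rightarrow> (nat \<Rightarrow> nat)" where
  "shift x = (\<lambda>i. x (Suc i))"

definition borelX :: "(nat \<Rightarrow> nat \<Rightarrow> bool) \<Rightarrow> (nat \<Rightarrow> nat) measure" where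
  "borelX A = restrict_space borel (shift_space A)"

definition birkhoff :: "nat \<Rightarrow> ((nat \<Rightarrow> nat) \<Rightarrow> real) \<Rightarrow> (nat \<Rightarrow> nat) \<Rightarrow> real" where
  "birkhoff n f x = (\<Sum>i<n. f ((shift ^^ i) x))"

definition adm_words :: "(nat \<Rightarrow> nat \<Rightarrow> bool) \<Rightarrow> nat \<Rightarrow> nat list set" where
  "adm_words A n = {w. length w = n \<and> (\<forall>i. Suc i < n \<longrightarrow> A (w ! i) (w ! Suc i))}"

definition adm_words_ab :: "(nat \<Rightarrow> nat \<Rightarrow> bool) \<Rightarrow> nat \<Rightarrow> nat \<Rightarrow> nat \<Rightarrow> nat list set" where
  "adm_words_ab A n a b = {w \<in> adm_words A n. w ! 0 = a \<and> w ! (n - 1) = b}"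

definition cyl :: "(nat \<Rightarrow> nat \<Rightarrow> bool) \<Rightarrow> nat list \<Rightarrow> (nat \<Rightarrow> nat) set" where
  "cyl A w = {x \<in> shift_space A. \<forall>i<length w. x i = w ! i}"

definition cylset :: "(nat \<Rightarrow> nat \<Rightarrow> bool) \<Rightarrow> nat list set \<Rightarrow> (nat \<Rightarrow> nat) set" where
  "cylset A W = (\<Union>w\<in>W. cyl A w)"

definition prob_on_X :: "(nat \<Rightarrow> nat \<Rightarrow> bool) \<Rightarrow> (nat \<Rightarrow> nat) measure \<Rightarrow> bool" where
  "prob_on_X A \<mu> \<longleftrightarrow> prob_space \<mu> \<and> sets \<mu> = sets (borelX A)"

definition shift_invariant :: "(nat \<Rightarrow> nat \<Rightarrow> bool) \<Rightarrow> (nat \<Rightarrow> nat) measure \<Rightarrow> bool" where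
  "shift_invariant A \<mu> \<longleftrightarrow> prob_on_X A \<mu> \<and>
     (\<forall>B\<in>sets \<mu>. emeasure \<mu> (shift -` B \<inter> shift_space A) = emeasure \<mu> B)"

definition gibbs_state :: "(nat \<Rightarrow> nat \<Rightarrow> bool) \<Rightarrow> ((nat \<Rightarrow> nat) \<Rightarrow> real) \<Rightarrow>
    (nat \<Rightarrow> nat) measure \<Rightarrow> real \<Rightarrow> real \<Rightarrow> bool" where
  "gibbs_state A \<phi> \<mu> c0 P \<longleftrightarrow> prob_on_X A \<mu> \<and>
     (\<forall>n\<ge>1. \<forall>x\<in>shift_space A.
        inverse c0 \<le> measure \<mu> (cyl A (map x [0..<n])) / exp (- P * real n + birkhoff n \<phi> x) \<and>
        measure \<mu> (cyl A (map x [0..<n])) / exp (- P * real n + birkhoff n \<phi> x) \<le> c0)"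

definition fin_partition :: "(nat \<Rightarrow> nat) measure \<Rightarrow> (nat \<Rightarrow> nat) set set \<Rightarrow> bool" where
  "fin_partition \<mu> \<P> \<longleftrightarrow> finite \<P> \<and> \<P> \<subseteq> sets \<mu> \<and> \<Union>\<P> = space \<mu> \<and>
     (\<forall>p\<in>\<P>. \<forall>q\<in>\<P>. p \<noteq> q \<longrightarrow> p \<inter> q = {})"

definition part_entropy :: "(nat \<Rightarrow> nat) measure \<Rightarrow> (nat \<Rightarrow> nat) set set \<Rightarrow> real" where
  "part_entropy \<mu> \<P> = (\<Sum>p\<in>\<P>. if measure \<mu> p = 0 then 0 else - measure \<mu> p * ln (measure \<mu> p))"

definition join_iter :: "(nat \<Rightarrow> nat) measure \<Rightarrow> (nat \<Rightarrow> nat) set set \<Rightarrow> nat \<Rightarrow> (nat \<Rightarrow> nat) set set" where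
  "join_iter \<mu> \<P> n = {space \<mu> \<inter> (\<Inter>i<n. (shift ^^ i) -` p i) | p. \<forall>i<n. p i \<in> \<P>}"

definition ks_entropy_part :: "(nat \<Rightarrow> nat) measure \<Rightarrow> (nat \<Rightarrow> nat) set set \<Rightarrow> real" where
  "ks_entropy_part \<mu> \<P> = lim (\<lambda>n. part_entropy \<mu> (join_iter \<mu> \<P> (Suc n)) / real (Suc n))"

definition ks_entropy :: "(nat \<Rightarrow> nat) measure \<Rightarrow> ereal" where
  "ks_entropy \<mu> = (SUP \<P>\<in>{\<P>. fin_partition \<mu> \<P>}. ereal (ks_entropy_part \<mu> \<P>))"

(* M_phi(sigma): invariant measures with  int phi > -infinity *)
definition M_phi :: "(nat \<Rightarrow> nat \<Rightarrow> bool) \<Rightarrow> ((nat \<Rightarrow> nat) \<Rightarrow> real) \<Rightarrow> (nat \<Rightarrow> nat) measure set" where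
  "M_phi A \<phi> = {\<nu>. shift_invariant A \<nu> \<and> \<phi> \<in> borel_measurable \<nu> \<and>
                    (\<integral>\<^sup>+ x. ennreal (- \<phi> x) \<partial>\<nu>) < \<infinity>}"

definition free_energy :: "(nat \<Rightarrow> nat \<Rightarrow> bool) \<Rightarrow> ((nat \<Rightarrow> nat) \<Rightarrow> real) \<Rightarrow> real \<Rightarrow>
    (nat \<Rightarrow> nat) measure \<Rightarrow> ereal" where
  "free_energy A \<phi> P \<nu> = (if \<nu> \<in> M_phi A \<phi>
      then ereal (- P) + ks_entropy \<nu> + ereal (integral\<^sup>L \<nu> \<phi>) else - \<infinity>)"

end

theory Submission
  imports Defs
begin


definition eta :: "real \<Rightarrow> real" where
  "eta p = (if p = 0 then 0 else - p * ln p)"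

lemma eta_nonneg: "0 \<le> p \<Longrightarrow> p \<le> 1 \<Longrightarrow> 0 \<le> eta p"
  unfolding eta_def by (auto simp: mult_nonneg_nonpos ln_le_zero_iff)

lemma eta_subadd:
  assumes "0 \<le> a" "0 \<le> b" shows "eta (a + b) \<le> eta a + eta b"
proof (cases "a = 0 \<or> b = 0")
  case True then show ?thesis using assms by (auto simp: eta_def)
next
  case False
  then have a: "a > 0" and b: "b > 0" using assms by auto
  have "a * ln a \<le> a * ln (a + b)" using a b by (intro mult_left_mono) auto
  moreover have "b * ln b \<le> b * ln (a + b)" using a b by (intro mult_left_mono) auto
  ultimately have "a * ln a + b * ln b \<le> a * ln (a + b) + b * ln (a + b)" by linarith
  then show ?thesis using a b by (simp add: eta_def algebra_simps)
qed

lemma eta_sum_le: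
  assumes "finite S" "\<And>x. x \<in> S \<Longrightarrow> 0 \<le> f x"
  shows "eta (\<Sum>x\<in>S. f x) \<le> (\<Sum>x\<in>S. eta (f x))"
  using assms
proof (induction S rule: finite_induct)
  case empty then show ?case by (simp add: eta_def)
next
  case (insert x S)
  have "eta (\<Sum>y\<in>insert x S. f y) = eta (f x + (\<Sum>y\<in>S. f y))" using insert by simp
  also have "\<dots> \<le> eta (f x) + eta (\<Sum>y\<in>S. f y)"
    using insert by (intro eta_subadd) (auto intro: sum_nonneg)
  also have "\<dots> \<le> eta (f x) + (\<Sum>y\<in>S. eta (f y))" using insert by auto
  finally show ?case using insert by simp
qed

lemma eta_mult:
  assumes "0 \<le> a" "0 \<le> b" shows "eta (a * b) = a * eta b + b * eta a"
  using assms by (auto simp: eta_def ln_mult algebra_simps)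

lemma eta_div:
  assumes "0 \<le> p" "c > 0" shows "eta (p / c) = eta p / c + p * ln c / c"
  using assms by (auto simp: eta_def ln_div field_simps)

lemma eta_avg_ge:
  assumes "finite R" "card R > 0" "\<And>r. r \<in> R \<Longrightarrow> 0 \<le> p r"
  shows "(\<Sum>r\<in>R. eta (p r)) / card R \<le> eta ((\<Sum>r\<in>R. p r) / card R)"
proof -
  define m where "m = real (card R)"
  have m: "m > 0" using assms unfolding m_def by auto
  define P where "P = (\<Sum>r\<in>R. p r) / m"
  have P0: "P \<ge> 0" unfolding P_def using assms m by (auto intro!: divide_nonneg_pos sum_nonneg)
  show ?thesis
  proof (cases "P = 0")
    case True
    then have "(\<Sum>r\<in>R. p r) = 0" using m unfolding P_def by simp
    then have "\<forall>r\<in>R. p r = 0" using assms sum_nonneg_eq_0_iff by blast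
    then show ?thesis by (simp add: eta_def)
  next
    case False
    then have Pp: "P > 0" using P0 by simp
    have key: "p r * ln P - p r * ln (p r) \<le> P - p r" if "r \<in> R" for r
    proof (cases "p r = 0")
      case True then show ?thesis using Pp by simp
    next
      case False
      then have pr: "p r > 0" using assms(3)[OF that] by linarith
      have "ln (P / p r) \<le> P / p r - 1" using Pp pr by (intro ln_le_minus_one) auto
      then have "p r * ln (P / p r) \<le> p r * (P / p r - 1)" using pr by (intro mult_left_mono) auto
      then show ?thesis using pr Pp by (simp add: ln_div algebra_simps)
    qed
    have "(\<Sum>r\<in>R. p r * ln P - p r * ln (p r)) \<le> (\<Sum>r\<in>R. P - p r)"
      by (intro sum_mono key)
    also have "\<dots> = m * P - (\<Sum>r\<in>R. p r)" by (simp add: sum_subtractf m_def)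
    also have "\<dots> = 0" using m unfolding P_def by simp
    finally have *: "(\<Sum>r\<in>R. p r) * ln P \<le> (\<Sum>r\<in>R. p r * ln (p r))"
      by (simp add: sum_subtractf sum_distrib_right)
    have e: "eta (p r) = - p r * ln (p r)" for r by (simp add: eta_def)
    have "(\<Sum>r\<in>R. eta (p r)) / m = - (\<Sum>r\<in>R. p r * ln (p r)) / m"
      by (simp add: e sum_negf)
    also have "\<dots> \<le> - ((\<Sum>r\<in>R. p r) * ln P) / m"
      using * m by (intro divide_right_mono) auto
    also have "\<dots> = eta P" using Pp m unfolding P_def eta_def by (auto simp: field_simps)
    finally show ?thesis unfolding P_def m_def .
  qed
qed

lemma eta_avg_le:
  assumes "finite R" "card R > 0" "\<And>r. r \<in> R \<Longrightarrow> 0 \<le> p r"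
  shows "eta ((\<Sum>r\<in>R. p r) / card R) \<le> (\<Sum>r\<in>R. eta (p r)) / card R + ln (card R) * (\<Sum>r\<in>R. p r) / card R"
proof -
  have c: "real (card R) > 0" using assms by simp
  have "eta ((\<Sum>r\<in>R. p r) / card R) = eta (\<Sum>r\<in>R. p r / card R)" by (simp add: sum_divide_distrib)
  also have "\<dots> \<le> (\<Sum>r\<in>R. eta (p r / card R))" using assms c by (intro eta_sum_le) auto
  also have "\<dots> = (\<Sum>r\<in>R. eta (p r) / card R + p r * ln (card R) / card R)"
    using assms c by (intro sum.cong refl eta_div) auto
  also have "\<dots> = (\<Sum>r\<in>R. eta (p r)) / card R + ln (card R) * (\<Sum>r\<in>R. p r) / card R"
    by (simp add: sum.distrib sum_divide_distrib[symmetric] sum_distrib_left sum_distrib_right mult.commute)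
  finally show ?thesis .
qed

lemma sum_group_le:
  fixes f :: "'a \<Rightarrow> real"
  assumes "finite S" "finite T" "\<And>x. x \<in> S \<Longrightarrow> 0 \<le> f x"
  shows "(\<Sum>y\<in>T. \<Sum>x\<in>{x\<in>S. g x = y}. f x) \<le> (\<Sum>x\<in>S. f x)"
proof -
  let ?S' = "{x\<in>S. g x \<in> T}"
  have "(\<Sum>y\<in>T. \<Sum>x\<in>{x\<in>S. g x = y}. f x) = (\<Sum>y\<in>T. \<Sum>x\<in>{x\<in>?S'. g x = y}. f x)"
    by (intro sum.cong refl) (auto intro!: sum.cong)
  also have "\<dots> = (\<Sum>x\<in>?S'. f x)" using assms by (intro sum.group) auto
  also have "\<dots> \<le> (\<Sum>x\<in>S. f x)" using assms by (intro sum_mono2) auto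
  finally show ?thesis .
qed



definition LU :: "'a set \<Rightarrow> nat \<Rightarrow> 'a list set" where
  "LU U J = {ws. length ws = J \<and> set ws \<subseteq> U}"

definition prodw :: "('a \<Rightarrow> real) \<Rightarrow> 'a list \<Rightarrow> real" where
  "prodw q ws = prod_list (map q ws)"

lemma finite_LU: "finite U \<Longrightarrow> finite (LU U J)"
  unfolding LU_def using finite_lists_length_eq[of U J] by (simp add: conj_commute)

lemma LU_0: "LU U 0 = {[]}" by (auto simp: LU_def)

lemma LU_Suc: "LU U (Suc J) = (\<lambda>(u, ws). u # ws) ` (U \<times> LU U J)"
  unfolding LU_def by (auto simp: length_Suc_conv image_iff)

lemma LU_Suc_sum:
  "(\<Sum>ws\<in>LU U (Suc J). f ws) = (\<Sum>u\<in>U. \<Sum>ws\<in>LU U J. f (u # ws))"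
proof -
  have "inj_on (\<lambda>(u, ws). u # ws) (U \<times> LU U J)" by (auto simp: inj_on_def)
  then have "(\<Sum>ws\<in>LU U (Suc J). f ws) = (\<Sum>p\<in>U \<times> LU U J. f (case p of (u, ws) \<Rightarrow> u # ws))"
    unfolding LU_Suc by (simp add: sum.reindex comp_def)
  also have "\<dots> = (\<Sum>u\<in>U. \<Sum>ws\<in>LU U J. f (u # ws))"
    by (simp add: sum.cartesian_product) (intro sum.cong refl, auto)
  finally show ?thesis .
qed

lemma prodw_nonneg: "(\<And>u. 0 \<le> q u) \<Longrightarrow> 0 \<le> prodw q ws"
  unfolding prodw_def by (induction ws) auto

lemma prodw_Cons[simp]: "prodw q (u # ws) = q u * prodw q ws"
  by (simp add: prodw_def)

lemma sum_prodw:
  assumes "(\<Sum>u\<in>U. q u) = 1"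
  shows "(\<Sum>ws\<in>LU U J. prodw q ws) = 1"
proof (induction J)
  case 0 then show ?case by (simp add: LU_0 prodw_def)
next
  case (Suc J)
  have "(\<Sum>ws\<in>LU U (Suc J). prodw q ws) = (\<Sum>u\<in>U. q u * (\<Sum>ws\<in>LU U J. prodw q ws))"
    by (simp add: LU_Suc_sum sum_distrib_left)
  then show ?case using Suc assms by simp
qed

lemma entropy_prodw:
  assumes "finite U" "(\<Sum>u\<in>U. q u) = 1" "\<And>u. 0 \<le> q u"
  shows "(\<Sum>ws\<in>LU U J. eta (prodw q ws)) = J * (\<Sum>u\<in>U. eta (q u))"
proof (induction J)
  case 0 then show ?case by (simp add: LU_0 prodw_def eta_def)
next
  case (Suc J)
  have "(\<Sum>ws\<in>LU U (Suc J). eta (prodw q ws))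
      = (\<Sum>u\<in>U. \<Sum>ws\<in>LU U J. q u * eta (prodw q ws) + prodw q ws * eta (q u))"
    by (simp add: LU_Suc_sum eta_mult assms prodw_nonneg)
  also have "\<dots> = (\<Sum>u\<in>U. q u * (\<Sum>ws\<in>LU U J. eta (prodw q ws)) + (\<Sum>ws\<in>LU U J. prodw q ws) * eta (q u))"
    by (simp add: sum.distrib sum_distrib_left sum_distrib_right)
  also have "\<dots> = (\<Sum>u\<in>U. q u * (J * (\<Sum>u\<in>U. eta (q u))) + eta (q u))"
    using Suc sum_prodw[OF assms(2)] by simp
  also have "\<dots> = Suc J * (\<Sum>u\<in>U. eta (q u))"
  proof -
    have "(\<Sum>u\<in>U. q u * (J * (\<Sum>u\<in>U. eta (q u)))) = J * (\<Sum>u\<in>U. eta (q u))"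
      using assms(2) by (simp add: sum_distrib_right[symmetric])
    then show ?thesis by (simp add: sum.distrib algebra_simps)
  qed
  finally show ?case .
qed



lemma prob_fibres_sum:
  assumes "prob_space M" "finite S" "\<And>s. s \<in> space M \<Longrightarrow> X s \<in> S"
    "\<And>x. {s\<in>space M. X s = x} \<in> sets M"
  shows "measure M {s\<in>space M. g (X s) = y} = (\<Sum>x\<in>{x\<in>S. g x = y}. measure M {s\<in>space M. X s = x})"
proof -
  interpret prob_space M by fact
  have "{s\<in>space M. g (X s) = y} = (\<Union>x\<in>{x\<in>S. g x = y}. {s\<in>space M. X s = x})"
    using assms(3) by auto
  moreover have "measure M (\<Union>x\<in>{x\<in>S. g x = y}. {s\<in>space M. X s = x}) = (\<Sum>x\<in>{x\<in>S. g x = y}. measure M {s\<in>space M. X s = x})"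
    using assms by (intro finite_measure_finite_Union) (auto simp: disjoint_family_on_def)
  ultimately show ?thesis by simp
qed

lemma prob_sum_le1:
  assumes "prob_space M" "finite T" "\<And>x. {s\<in>space M. X s = x} \<in> sets M"
  shows "(\<Sum>x\<in>T. measure M {s\<in>space M. X s = x}) \<le> 1"
proof -
  interpret prob_space M by fact
  have "(\<Sum>x\<in>T. measure M {s\<in>space M. X s = x}) = measure M (\<Union>x\<in>T. {s\<in>space M. X s = x})"
    using assms by (intro finite_measure_finite_Union[symmetric]) (auto simp: disjoint_family_on_def)
  also have "\<dots> \<le> 1" by simp
  finally show ?thesis .
qed

lemma data_processing:
  assumes "prob_space M" "finite S" "finite T" "\<And>s. s \<in> space M \<Longrightarrow> X s \<in> S"
    "\<And>x. {s\<in>space M. X s = x} \<in> sets M"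
    "\<And>s. s \<in> space M \<Longrightarrow> Y s = g (X s)"
  shows "(\<Sum>y\<in>T. eta (measure M {s\<in>space M. Y s = y})) \<le> (\<Sum>x\<in>S. eta (measure M {s\<in>space M. X s = x}))"
proof -
  interpret prob_space M by fact
  have "(\<Sum>y\<in>T. eta (measure M {s\<in>space M. Y s = y})) = (\<Sum>y\<in>T. eta (measure M {s\<in>space M. g (X s) = y}))"
    using assms(6) by (intro sum.cong refl arg_cong[where f=eta] arg_cong[where f="measure M"]) auto
  also have "\<dots> = (\<Sum>y\<in>T. eta (\<Sum>x\<in>{x\<in>S. g x = y}. measure M {s\<in>space M. X s = x}))"
    by (simp only: prob_fibres_sum[OF assms(1,2,4,5), of g])
  also have "\<dots> \<le> (\<Sum>y\<in>T. \<Sum>x\<in>{x\<in>S. g x = y}. eta (measure M {s\<in>space M. X s = x}))"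
    using assms by (intro sum_mono eta_sum_le) auto
  also have "\<dots> \<le> (\<Sum>x\<in>S. eta (measure M {s\<in>space M. X s = x}))"
    using assms by (intro sum_group_le eta_nonneg) auto
  finally show ?thesis .
qed



locale wsetup =
  fixes U :: "nat list set" and Qp :: "nat list pmf" and u0 :: "nat list" and m :: nat
  assumes finU: "finite U" and u0U: "u0 \<in> U" and setQ: "set_pmf Qp \<subseteq> U"
    and mpos: "m > 0" and lenU: "\<And>u. u \<in> U \<Longrightarrow> length u = m"
begin

definition "M = stream_space (measure_pmf Qp)"
definition fixw :: "nat list \<Rightarrow> nat list" where "fixw u = (if u \<in> U then u else u0)"

lemma fixw_U: "fixw u \<in> U" by (simp add: fixw_def u0U)

lemma prob_M: "prob_space M"
  unfolding M_def by (rule prob_space.prob_space_stream_space) (rule prob_space_measure_pmf)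

lemma space_M: "space M = UNIV"
  by (simp add: M_def space_stream_space)

lemma sets_M: "sets M = sets (stream_space (count_space UNIV))"
  unfolding M_def by (rule sets_stream_space_cong) simp

lemma meas_stake_fun: "(\<lambda>s. g (stake J s)) \<in> measurable M (count_space UNIV)"
proof -
  have "stake J \<in> measurable M (count_space UNIV)"
    using measurable_stake[of J] by (simp add: measurable_cong_sets[OF sets_M refl])
  then show ?thesis by (rule measurable_compose) simp
qed

lemma sets_stake: "{s. P (stake J s)} \<in> sets M"
proof -
  have "(\<lambda>s. stake J s) -` {x. P x} \<inter> space M \<in> sets M"
    by (rule measurable_sets[OF meas_stake_fun]) simp
  then show ?thesis by (simp add: space_M vimage_def)
qed

lemma emeasure_stl:
  assumes "{s. P s} \<in> sets M"
  shows "emeasure M {s. P (stl s)} = emeasure M {s. P s}"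
proof -
  interpret Q: prob_space "measure_pmf Qp" by (rule prob_space_measure_pmf)
  have m1: "{s. P (stl s)} \<in> sets M"
  proof -
    have "stl \<in> measurable M M" unfolding M_def by simp
    from measurable_sets[OF this assms] show ?thesis by (simp add: space_M vimage_def)
  qed
  have "emeasure M {s. P (stl s)} = (\<integral>\<^sup>+t. emeasure M {x\<in>space M. t ## x \<in> {s. P (stl s)}} \<partial>measure_pmf Qp)"
    unfolding M_def by (rule prob_space.emeasure_stream_space[OF prob_space_measure_pmf]) (use m1 in \<open>simp add: M_def\<close>)
  also have "\<dots> = (\<integral>\<^sup>+t. emeasure M {s. P s} \<partial>measure_pmf Qp)"
    by (simp add: space_M)
  also have "\<dots> = emeasure M {s. P s}" by simp
  finally show ?thesis .
qed

lemma emeasure_shd: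
  assumes "{s. P s} \<in> sets M"
  shows "emeasure M {s. R (shd s) \<and> P (stl s)} = emeasure (measure_pmf Qp) {t. R t} * emeasure M {s. P s}"
proof -
  interpret Q: prob_space "measure_pmf Qp" by (rule prob_space_measure_pmf)
  have m1: "{s. R (shd s) \<and> P (stl s)} \<in> sets M"
  proof -
    have "stl \<in> measurable M M" unfolding M_def by simp
    from measurable_sets[OF this assms] have "{s. P (stl s)} \<in> sets M" by (simp add: space_M vimage_def)
    moreover have "shd \<in> measurable M (measure_pmf Qp)" unfolding M_def by simp
    from measurable_sets[OF this, of "{t. R t}"] have "{s. R (shd s)} \<in> sets M" by (simp add: space_M vimage_def)
    ultimately show ?thesis by (simp add: Collect_conj_eq)
  qed
  have "emeasure M {s. R (shd s) \<and> P (stl s)} = (\<integral>\<^sup>+t. emeasure M {x\<in>space M. t ## x \<in> {s. R (shd s) \<and> P (stl s)}} \<partial>measure_pmf Qp)"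
    unfolding M_def by (rule prob_space.emeasure_stream_space[OF prob_space_measure_pmf]) (use m1 in \<open>simp add: M_def\<close>)
  also have "\<dots> = (\<integral>\<^sup>+t. emeasure M {s. P s} * indicator {t. R t} t \<partial>measure_pmf Qp)"
    by (intro nn_integral_cong) (auto simp: space_M split: split_indicator)
  also have "\<dots> = emeasure M {s. P s} * emeasure (measure_pmf Qp) {t. R t}"
    by (subst nn_integral_cmult) auto
  finally show ?thesis by (simp add: mult.commute)
qed

lemma emeasure_fixw: "emeasure (measure_pmf Qp) {t. fixw t = u} = (if u \<in> U then pmf Qp u else 0)"
proof -
  have "emeasure (measure_pmf Qp) {t. fixw t = u} = emeasure (measure_pmf Qp) ({t. fixw t = u} \<inter> U)"
    using setQ by (intro emeasure_eq_AE) (auto simp: AE_measure_pmf_iff)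
  also have "{t. fixw t = u} \<inter> U = (if u \<in> U then {u} else {})" by (auto simp: fixw_def)
  finally show ?thesis by (simp add: emeasure_pmf_single)
qed

lemma prob_stake:
  assumes "ws \<in> LU U J"
  shows "measure M {s. map fixw (stake J s) = ws} = prodw (pmf Qp) ws"
proof -
  interpret M: prob_space M by (rule prob_M)
  have "emeasure M {s. map fixw (stake J s) = ws} = ennreal (prodw (pmf Qp) ws)"
    using assms
  proof (induction J arbitrary: ws)
    case 0 then show ?case using M.emeasure_space_1 by (simp add: LU_def space_M prodw_def)
  next
    case (Suc J)
    then obtain u ws' where ws: "ws = u # ws'" and u: "u \<in> U" and ws': "ws' \<in> LU U J"
      by (auto simp: LU_def length_Suc_conv)
    have "{s. map fixw (stake (Suc J) s) = ws} = {s. (\<lambda>t. fixw t = u) (shd s) \<and> (\<lambda>x. map fixw (stake J x) = ws') (stl s)}"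
      by (auto simp: ws)
    then have "emeasure M {s. map fixw (stake (Suc J) s) = ws}
       = emeasure (measure_pmf Qp) {t. fixw t = u} * emeasure M {s. map fixw (stake J s) = ws'}"
      using emeasure_shd[of "\<lambda>x. map fixw (stake J x) = ws'" "\<lambda>t. fixw t = u"] sets_stake by simp
    also have "\<dots> = ennreal (pmf Qp u) * ennreal (prodw (pmf Qp) ws')"
      using Suc.IH[OF ws'] u by (simp add: emeasure_fixw)
    finally show ?case by (simp add: ws ennreal_mult' prodw_nonneg)
  qed
  then show ?thesis by (simp add: M.emeasure_eq_measure prodw_nonneg)
qed

end


lemma funpow_shift: "(shift ^^ r) x = (\<lambda>i. x (i + r))"
  by (induction r arbitrary: x) (auto simp: shift_def funpow_Suc_right)

lemma shift_space_funpow: "x \<in> shift_space A \<Longrightarrow> (shift ^^ r) x \<in> shift_space A"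
  by (auto simp: funpow_shift shift_space_def)

lemma space_borelX: "space (borelX A) = shift_space A"
  by (simp add: borelX_def space_restrict_space)

locale wsetup2 = wsetup +
  fixes A :: "nat \<Rightarrow> nat \<Rightarrow> bool" and a :: nat
  assumes startU: "\<And>u. u \<in> U \<Longrightarrow> u ! 0 = a"
    and admU: "\<And>u i. u \<in> U \<Longrightarrow> Suc i < m \<Longrightarrow> A (u ! i) (u ! Suc i)"
    and endU: "\<And>u. u \<in> U \<Longrightarrow> A (u ! (m - 1)) a"
begin

definition Phi0 :: "nat list stream \<Rightarrow> nat \<Rightarrow> nat" where
  "Phi0 s i = fixw (s !! (i div m)) ! (i mod m)"

definition Phi :: "nat \<Rightarrow> nat list stream \<Rightarrow> nat \<Rightarrow> nat" where
  "Phi r s = (\<lambda>i. Phi0 s (i + r))"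

lemma Phi0_adm: "A (Phi0 s i) (Phi0 s (Suc i))"
proof (cases "Suc (i mod m) = m")
  case True
  then have "Suc i mod m = 0" "Suc i div m = Suc (i div m)" by (auto simp: mod_Suc div_Suc)
  moreover have "i mod m = m - 1" using True by simp
  ultimately show ?thesis
    unfolding Phi0_def using endU[OF fixw_U] startU[OF fixw_U] by simp
next
  case False
  then have "Suc i mod m = Suc (i mod m)" "Suc i div m = i div m"
    using mpos by (auto simp: mod_Suc div_Suc)
  moreover have "Suc (i mod m) < m" using False mpos
    by (metis Suc_lessI mod_less_divisor)
  ultimately show ?thesis
    unfolding Phi0_def using admU[OF fixw_U] by simp
qed

lemma Phi0_X: "Phi0 s \<in> shift_space A"
  using Phi0_adm by (simp add: shift_space_def)

lemma Phi_X: "Phi r s \<in> shift_space A"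
  using Phi0_adm by (simp add: shift_space_def Phi_def)

lemma Phi_eq: "Phi r s = (shift ^^ r) (Phi0 s)"
  by (simp add: Phi_def funpow_shift)

lemma Phi_Suc: "Phi (Suc r) s = shift (Phi r s)"
  by (simp add: Phi_def shift_def)

lemma Phi_m: "Phi m s = Phi0 (stl s)"
proof
  fix i
  have "(i + m) div m = Suc (i div m)" "(i + m) mod m = i mod m" using mpos by auto
  then show "Phi m s i = Phi0 (stl s) i" by (simp add: Phi_def Phi0_def)
qed

lemma Phi0_stake: "Phi0 s i = fixw (stake (Suc (i div m)) s ! (i div m)) ! (i mod m)"
  unfolding Phi0_def by (subst stake_nth) auto

lemma meas_Phi0_i: "(\<lambda>s. Phi0 s i) \<in> measurable M (count_space UNIV)"
  unfolding Phi0_stake by (rule meas_stake_fun)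

lemma meas_Phi: "Phi r \<in> measurable M borel"
proof (rule measurable_coordinatewise_then_product)
  fix i
  have "(\<lambda>s. Phi0 s (i + r)) \<in> measurable M (count_space UNIV)" by (rule meas_Phi0_i)
  then show "(\<lambda>x. Phi r x i) \<in> borel_measurable M"
    by (simp add: Phi_def measurable_cong_sets[OF refl sets_borel_eq_count_space])
qed

lemma meas_PhiX: "Phi r \<in> measurable M (borelX A)"
  unfolding borelX_def by (rule measurable_restrict_space2) (auto simp: Phi_X meas_Phi)

definition "R = measure_pmf (pmf_of_set {..<m})"
definition "N2 = R \<Otimes>\<^sub>M M"
definition "mu = distr N2 (borelX A) (\<lambda>(r, s). Phi r s)"

lemma sets_R: "sets R = sets (count_space UNIV)" by (simp add: R_def)

lemma meas_pair: "(\<lambda>(r, s). Phi r s) \<in> measurable N2 (borelX A)"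
proof -
  have "(\<lambda>x. (\<lambda>r. Phi r (snd x)) (fst x) ) \<in> measurable N2 (borelX A)"
  proof (rule measurable_compose_countable)
    fix r :: nat show "(\<lambda>x. Phi r (snd x)) \<in> measurable N2 (borelX A)"
      unfolding N2_def using meas_PhiX by (rule measurable_compose[OF measurable_snd])
  next
    show "fst \<in> measurable N2 (count_space UNIV)"
      unfolding N2_def using measurable_fst[of R M] by (simp add: measurable_cong_sets[OF refl sets_R])
  qed
  then show ?thesis by (simp add: case_prod_beta')
qed

lemma prob_R: "prob_space R" by (simp add: R_def prob_space_measure_pmf)

lemma prob_N2: "prob_space N2"
  unfolding N2_def using prob_R prob_M by (intro prob_space_pair) 

lemma prob_mu: "prob_space mu"
  unfolding mu_def using prob_N2 meas_pair by (intro prob_space.prob_space_distr)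

lemma sets_mu: "sets mu = sets (borelX A)" by (simp add: mu_def)

lemma space_mu: "space mu = shift_space A" by (simp add: mu_def space_borelX)

lemma emeasure_mu:
  assumes "B \<in> sets (borelX A)"
  shows "emeasure mu B = (\<Sum>r<m. emeasure M {s. Phi r s \<in> B}) / m"
proof -
  interpret M: prob_space M by (rule prob_M)
  have "emeasure mu B = emeasure N2 ((\<lambda>(r, s). Phi r s) -` B \<inter> space N2)"
    unfolding mu_def using assms meas_pair by (simp add: emeasure_distr)
  also have "\<dots> = (\<integral>\<^sup>+ p. indicator ((\<lambda>(r, s). Phi r s) -` B \<inter> space N2) p \<partial>N2)"
    by (rule nn_integral_indicator[symmetric]) (use assms meas_pair in \<open>simp add: measurable_sets\<close>)
  also have "\<dots> = (\<integral>\<^sup>+ r. \<integral>\<^sup>+ s. indicator ((\<lambda>(r, s). Phi r s) -` B \<inter> space N2) (r, s) \<partial>M \<partial>R)"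
    unfolding N2_def by (rule M.nn_integral_fst[symmetric]) (use assms meas_pair in \<open>simp add: N2_def measurable_sets\<close>)
  also have "\<dots> = (\<integral>\<^sup>+ r. emeasure M {s. Phi r s \<in> B} \<partial>R)"
  proof (intro nn_integral_cong)
    fix r
    have "(\<lambda>s. indicator ((\<lambda>(r, s). Phi r s) -` B \<inter> space N2) (r, s)) = (indicator {s. Phi r s \<in> B} :: _ \<Rightarrow> ennreal)"
      by (auto simp: N2_def space_pair_measure space_M R_def split: split_indicator)
    moreover have "{s. Phi r s \<in> B} \<in> sets M"
      using measurable_sets[OF meas_PhiX assms] by (simp add: space_M vimage_def)
    ultimately show "(\<integral>\<^sup>+ s. indicator ((\<lambda>(r, s). Phi r s) -` B \<inter> space N2) (r, s) \<partial>M) = emeasure M {s. Phi r s \<in> B}"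
      by simp
  qed
  also have "\<dots> = (\<Sum>r<m. emeasure M {s. Phi r s \<in> B}) / m"
    unfolding R_def using mpos by (subst nn_integral_pmf_of_set) auto
  finally show ?thesis .
qed

end


lemma meas_coord_borel: "(\<lambda>x::nat \<Rightarrow> nat. x i) \<in> measurable borel borel"
proof -
  have "(\<lambda>x::nat \<Rightarrow> nat. x i) \<in> measurable (Pi\<^sub>M UNIV (\<lambda>_. borel)) borel"
    by (rule measurable_component_singleton) simp
  then show ?thesis by (simp add: measurable_cong_sets[OF sets_PiM_equal_borel refl])
qed

lemma meas_shift_borel: "shift \<in> measurable borel (borel :: (nat \<Rightarrow> nat) measure)"
  unfolding shift_def by (rule measurable_coordinatewise_then_product) (rule meas_coord_borel)

lemma shift_X: "x \<in> shift_space A \<Longrightarrow> shift x \<in> shift_space A"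
  by (auto simp: shift_def shift_space_def)

lemma meas_shift_X: "shift \<in> measurable (borelX A) (borelX A)"
  unfolding borelX_def
  by (intro measurable_restrict_space2 measurable_restrict_space1 meas_shift_borel)
     (auto simp: space_restrict_space shift_X)

lemma shift_pre_sets: "B \<in> sets (borelX A) \<Longrightarrow> shift -` B \<inter> shift_space A \<in> sets (borelX A)"
  using measurable_sets[OF meas_shift_X] by (simp add: space_borelX)

context wsetup2 begin

lemma sets_Phi_pre: "B \<in> sets (borelX A) \<Longrightarrow> {s. Phi r s \<in> B} \<in> sets M"
  using measurable_sets[OF meas_PhiX] by (simp add: space_M vimage_def)

lemma mu_invariant: "shift_invariant A mu"
  unfolding shift_invariant_def prob_on_X_def
proof (intro conjI ballI prob_mu sets_mu)
  interpret M: prob_space M by (rule prob_M)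
  fix B assume B: "B \<in> sets mu"
  then have B': "B \<in> sets (borelX A)" by (simp add: sets_mu)
  define f where "f r = emeasure M {s. Phi r s \<in> B}" for r
  have fin: "f 0 \<noteq> \<infinity>" unfolding f_def by simp
  have "f m = emeasure M {s. Phi0 (stl s) \<in> B}" unfolding f_def by (simp add: Phi_m)
  also have "\<dots> = emeasure M {s. Phi0 s \<in> B}"
    using sets_Phi_pre[OF B', of 0] by (intro emeasure_stl) (simp add: Phi_def)
  also have "\<dots> = f 0" unfolding f_def by (simp add: Phi_def)
  finally have fm: "f m = f 0" .
  have "f 0 + (\<Sum>r<m. f (Suc r)) = (\<Sum>r<Suc m. f r)" by (rule sum.lessThan_Suc_shift[symmetric])
  also have "\<dots> = f 0 + (\<Sum>r<m. f r)" by (simp add: fm add.commute)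
  finally have eq: "(\<Sum>r<m. f (Suc r)) = (\<Sum>r<m. f r)" using fin by (simp add: ennreal_add_left_cancel)
  have "emeasure mu (shift -` B \<inter> shift_space A) = (\<Sum>r<m. emeasure M {s. Phi r s \<in> shift -` B \<inter> shift_space A}) / m"
    by (rule emeasure_mu[OF shift_pre_sets[OF B']])
  also have "\<dots> = (\<Sum>r<m. f (Suc r)) / m"
    unfolding f_def by (simp add: Phi_Suc Phi_X)
  also have "\<dots> = emeasure mu B" using emeasure_mu[OF B'] eq by (simp add: f_def)
  finally show "emeasure mu (shift -` B \<inter> shift_space A) = emeasure mu B" .
qed

end


lemma open_coord_eq: "open {x :: nat \<Rightarrow> nat. x i = b}"
proof -
  have h: "\<forall>B. open B \<longrightarrow> open ((\<lambda>x::nat\<Rightarrow>nat. x i) -` B)"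
    using continuous_on_open_vimage[OF open_UNIV, of "\<lambda>x::nat\<Rightarrow>nat. x i"] by simp
  have "open ((\<lambda>x::nat\<Rightarrow>nat. x i) -` {b})" by (rule h[rule_format]) (rule discrete_topology_class.open_discrete)
  then show ?thesis by (simp add: vimage_def)
qed

lemma open_coord2: "open {x :: nat \<Rightarrow> nat. Q (x i) (x j)}"
proof -
  have "{x :: nat \<Rightarrow> nat. Q (x i) (x j)} = (\<Union>p\<in>{p. Q (fst p) (snd p)}. {x. x i = fst p} \<inter> {x. x j = snd p})"
    by auto
  also have "open \<dots>" by (intro open_UN ballI open_Int open_coord_eq)
  finally show ?thesis .
qed

lemma closed_coord2: "closed {x :: nat \<Rightarrow> nat. Q (x i) (x j)}"
proof -
  have "open (- {x :: nat \<Rightarrow> nat. Q (x i) (x j)})"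
    using open_coord2[of "\<lambda>a b. \<not> Q a b" i j] by (simp add: Compl_eq)
  then show ?thesis by (simp add: closed_def)
qed

lemma closed_shift_space: "closed (shift_space A)"
proof -
  have "shift_space A = (\<Inter>i. {x. A (x i) (x (Suc i))})" by (auto simp: shift_space_def)
  then show ?thesis by (simp add: closed_INT closed_coord2)
qed

lemma compact_Pi_fin:
  assumes "finite B" shows "compact {x :: nat \<Rightarrow> nat. \<forall>i. x i \<in> B}"
proof -
  have "{x :: nat \<Rightarrow> nat. \<forall>i. x i \<in> B} = PiE UNIV (\<lambda>_. B)" by (auto simp: PiE_def extensional_def)
  moreover have "compactin (product_topology (\<lambda>_. euclidean) UNIV) (PiE UNIV (\<lambda>_::nat. B))"
    using assms by (subst compactin_PiE) (auto intro: finite_imp_compact)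
  ultimately show ?thesis by (simp add: euclidean_product_topology)
qed

context wsetup2 begin

definition "Bs = \<Union> (set ` U)"
definition "K = {x \<in> shift_space A. \<forall>i. x i \<in> Bs}"

lemma finite_Bs: "finite Bs" using finU by (simp add: Bs_def)

lemma compact_K: "compact K"
proof -
  have "K = shift_space A \<inter> {x. \<forall>i. x i \<in> Bs}" by (auto simp: K_def)
  then show ?thesis using compact_Pi_fin[OF finite_Bs] closed_shift_space
    by (simp add: closed_Int_compact)
qed

lemma Phi0_Bs: "Phi0 s i \<in> Bs"
  unfolding Phi0_def Bs_def using fixw_U lenU[OF fixw_U] mpos
  by (auto intro!: bexI[of _ "fixw (s !! (i div m))"])

lemma Phi_K: "Phi r s \<in> K"
  using Phi_X Phi0_Bs by (simp add: K_def Phi_def)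

lemma K_sets: "K \<in> sets (borelX A)"
proof -
  have hi: "\<And>i. (\<lambda>x::nat\<Rightarrow>nat. x i) -` Bs \<inter> space borel \<in> sets borel"
  proof -
    fix i
    have "Bs \<in> sets (borel::nat measure)" by (simp add: sets_borel_eq_count_space)
    from measurable_sets[OF meas_coord_borel this] show "(\<lambda>x::nat\<Rightarrow>nat. x i) -` Bs \<inter> space borel \<in> sets borel" by simp
  qed
  have "{x::nat\<Rightarrow>nat. \<forall>i. x i \<in> Bs} = (\<Inter>i. (\<lambda>x. x i) -` Bs \<inter> space borel)" by auto
  also have "\<dots> \<in> sets borel" using hi by (intro sets.countable_INT) auto
  finally have "{x::nat\<Rightarrow>nat. \<forall>i. x i \<in> Bs} \<in> sets borel" .
  then show ?thesis unfolding borelX_def K_def sets_restrict_space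
    by (intro image_eqI[where x="{x. \<forall>i. x i \<in> Bs}"]) auto
qed

lemma mu_K: "emeasure mu K = 1"
proof -
  interpret M: prob_space M by (rule prob_M)
  have "emeasure mu K = (\<Sum>r<m. emeasure M {s. Phi r s \<in> K}) / m" by (rule emeasure_mu[OF K_sets])
  also have "\<dots> = (\<Sum>r<m. (1::ennreal)) / of_nat m" using Phi_K M.emeasure_space_1 by (intro arg_cong2[where f="(/)"] sum.cong refl) (simp_all add: space_M)
  also have "\<dots> = 1"
  proof -
    have "(of_nat m :: ennreal) / of_nat m = 1" using mpos by (intro ennreal_divide_self) (auto simp: of_nat_less_top)
    then show ?thesis by simp
  qed
  finally show ?thesis .
qed

end


context wsetup2 begin

lemma AE_mu_K: "AE x in mu. x \<in> K"
proof -
  interpret mu: prob_space mu by (rule prob_mu)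
  show ?thesis using mu_K by (intro mu.AE_prob_1) (simp add: mu.emeasure_eq_measure)
qed

lemma birkhoff_Phi0: "birkhoff m f (Phi0 s) = (\<Sum>r<m. f (Phi r s))"
  by (simp add: birkhoff_def Phi_eq)

lemma integral_mu:
  assumes f: "f \<in> borel_measurable (borelX A)" and bnd: "\<And>x. x \<in> K \<Longrightarrow> \<bar>f x\<bar> \<le> B"
  shows "integrable mu f" "integral\<^sup>L mu f = (\<integral>s. birkhoff m f (Phi0 s) \<partial>M) / m"
proof -
  interpret mu: prob_space mu by (rule prob_mu)
  interpret M: prob_space M by (rule prob_M)
  interpret R: prob_space R by (rule prob_R)
  interpret RM: pair_sigma_finite R M ..
  have fmu: "f \<in> borel_measurable mu" using f by (simp add: measurable_cong_sets[OF sets_mu refl])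
  show int: "integrable mu f"
    using AE_mu_K bnd by (intro mu.integrable_const_bound[where B=B] fmu) (auto elim!: eventually_mono)
  have intN2: "integrable N2 (\<lambda>p. f (case p of (r, s) \<Rightarrow> Phi r s))"
    using int unfolding mu_def by (subst (asm) integrable_distr_eq[OF meas_pair f]) simp
  have intM: "integrable M (\<lambda>s. f (Phi r s))" for r
    using bnd Phi_K measurable_comp[OF meas_PhiX f]
    by (intro M.integrable_const_bound[where B=B]) (auto simp: comp_def)
  have "integral\<^sup>L mu f = (\<integral>p. f (case p of (r, s) \<Rightarrow> Phi r s) \<partial>N2)"
    unfolding mu_def by (rule integral_distr[OF meas_pair f])
  also have "\<dots> = (\<integral>r. (\<integral>s. f (Phi r s) \<partial>M) \<partial>R)"
    using RM.integral_fst'[of "\<lambda>p. f (case p of (r, s) \<Rightarrow> Phi r s)"] intN2 by (simp add: N2_def)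
  also have "\<dots> = (\<Sum>r<m. (\<integral>s. f (Phi r s) \<partial>M)) / m"
    unfolding R_def using mpos by (subst integral_pmf_of_set) auto
  also have "(\<Sum>r<m. (\<integral>s. f (Phi r s) \<partial>M)) = (\<integral>s. (\<Sum>r<m. f (Phi r s)) \<partial>M)"
  proof -
    have "(\<integral>s. (\<Sum>r<m. f (Phi r s)) \<partial>M) = (\<Sum>r<m. (\<integral>s. f (Phi r s) \<partial>M))"
      using intM by simp
    then show ?thesis by simp
  qed
  finally show "integral\<^sup>L mu f = (\<integral>s. birkhoff m f (Phi0 s) \<partial>M) / m"
    by (simp add: birkhoff_Phi0)
qed

lemma integrable_M_birkhoff:
  assumes f: "f \<in> borel_measurable (borelX A)" and bnd: "\<And>x. x \<in> K \<Longrightarrow> \<bar>f x\<bar> \<le> B"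
  shows "integrable M (\<lambda>s. birkhoff m f (Phi0 s))"
proof -
  interpret M: prob_space M by (rule prob_M)
  have intM: "integrable M (\<lambda>s. f (Phi r s))" for r
    using bnd Phi_K measurable_comp[OF meas_PhiX f]
    by (intro M.integrable_const_bound[where B=B]) (auto simp: comp_def)
  show ?thesis unfolding birkhoff_Phi0 using intM by auto
qed

lemma distr_shd: "distr M (measure_pmf Qp) shd = measure_pmf Qp"
proof (rule measure_eqI)
  show "sets (distr M (measure_pmf Qp) shd) = sets (measure_pmf Qp)" by simp
  fix X assume "X \<in> sets (distr M (measure_pmf Qp) shd)"
  have sh: "shd \<in> measurable M (measure_pmf Qp)" unfolding M_def by simp
  interpret M: prob_space M by (rule prob_M)
  have "emeasure (distr M (measure_pmf Qp) shd) X = emeasure M {s. shd s \<in> X \<and> True}"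
    using sh by (simp add: emeasure_distr space_M vimage_def)
  also have "\<dots> = emeasure (measure_pmf Qp) {t. t \<in> X} * emeasure M {s. True}"
    by (rule emeasure_shd) (simp add: space_M[symmetric])
  also have "\<dots> = emeasure (measure_pmf Qp) X" using M.emeasure_space_1 by (simp add: space_M)
  finally show "emeasure (distr M (measure_pmf Qp) shd) X = emeasure (measure_pmf Qp) X" .
qed

lemma integral_shd:
  "(\<integral>s. g (fixw (shd s)) \<partial>M) = (\<Sum>u\<in>U. g u * pmf Qp u)"
proof -
  have sh: "shd \<in> measurable M (measure_pmf Qp)" unfolding M_def by simp
  have "(\<integral>s. g (fixw (shd s)) \<partial>M) = (\<integral>t. g (fixw t) \<partial>distr M (measure_pmf Qp) shd)"
    by (rule integral_distr[symmetric, OF sh]) simp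
  also have "\<dots> = (\<integral>t. g (fixw t) \<partial>measure_pmf Qp)" by (simp add: distr_shd)
  also have "\<dots> = (\<Sum>u\<in>U. g (fixw u) * pmf Qp u)"
    using setQ finU by (intro integral_measure_pmf_real) auto
  also have "\<dots> = (\<Sum>u\<in>U. g u * pmf Qp u)" by (simp add: fixw_def)
  finally show ?thesis .
qed

lemma integrable_shd: "integrable M (\<lambda>s. (g :: nat list \<Rightarrow> real) (fixw (shd s)))"
proof -
  interpret M: prob_space M by (rule prob_M)
  have "(\<lambda>s. g (fixw (shd s))) \<in> borel_measurable M"
  proof -
    have "(\<lambda>s. g (fixw (stake 1 s ! 0))) \<in> measurable M (count_space UNIV)" by (rule meas_stake_fun)
    then have "(\<lambda>s. g (fixw (shd s))) \<in> measurable M (count_space UNIV)" by simp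
    then show ?thesis by (rule measurable_compose) simp
  qed
  moreover have "\<bar>g (fixw (shd s))\<bar> \<le> (\<Sum>u\<in>U. \<bar>g u\<bar>)" for s
    using finU fixw_U by (intro member_le_sum) auto
  ultimately show ?thesis by (intro M.integrable_const_bound[where B="\<Sum>u\<in>U. \<bar>g u\<bar>"]) auto
qed

end


context wsetup2 begin

definition "nb = (SOME b. b \<notin> Bs)"
definition "code b = (if b \<in> Bs then b else nb)"
definition "Cb = insert nb Bs"
definition "cellb b = {x \<in> shift_space A. code (x 0) = b}"
definition "QP = cellb ` Cb"
definition "cellL t = {x \<in> shift_space A. \<forall>i<length t. code (x i) = t ! i}"

lemma nb_notin: "nb \<notin> Bs"
proof -
  have "\<exists>b. b \<notin> Bs" using finite_Bs by (metis ex_new_if_finite infinite_UNIV_nat)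
  then show ?thesis unfolding nb_def by (rule someI_ex)
qed

lemma shift_space_plus: "x \<in> shift_space A \<Longrightarrow> (\<lambda>i. x (i + k)) \<in> shift_space A"
  by (auto simp: shift_space_def)

lemma code_Cb: "code b \<in> Cb" by (simp add: code_def Cb_def)
lemma finite_Cb: "finite Cb" by (simp add: Cb_def finite_Bs)

lemma coord_sets: "{x \<in> shift_space A. P (x i)} \<in> sets (borelX A)"
proof -
  have "{x::nat\<Rightarrow>nat. P (x i)} \<in> sets borel"
  proof -
    have "{x :: nat} \<in> sets borel" for x by (simp add: sets_borel_eq_count_space)
    have "Collect P \<in> sets (borel::nat measure)" by (simp add: sets_borel_eq_count_space)
    from measurable_sets[OF meas_coord_borel this, of i] show ?thesis by (simp add: vimage_def)
  qed
  then show ?thesis unfolding borelX_def sets_restrict_space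
    by (intro image_eqI[where x="{x. P (x i)}"]) auto
qed

lemma cellL_sets: "cellL t \<in> sets (borelX A)"
proof -
  have "cellL t = shift_space A \<inter> (\<Inter>i\<in>{..<length t}. {x \<in> shift_space A. code (x i) = t ! i})"
    by (auto simp: cellL_def)
  also have "\<dots> \<in> sets (borelX A)"
  proof (cases "length t = 0")
    case True then show ?thesis
      using sets.top[of "borelX A"] by (simp add: space_borelX)
  next
    case False
    have "(\<Inter>i\<in>{..<length t}. {x \<in> shift_space A. code (x i) = t ! i}) \<in> sets (borelX A)"
      using False by (intro sets.finite_INT coord_sets) auto
    then show ?thesis using sets.top[of "borelX A"] by (simp add: space_borelX)
  qed
  finally show ?thesis .
qed

lemma fin_QP: "fin_partition mu QP"
  unfolding fin_partition_def
proof (intro conjI ballI impI)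
  show "finite QP" by (simp add: QP_def finite_Cb)
  show "QP \<subseteq> sets mu" by (auto simp: QP_def cellb_def sets_mu intro: coord_sets)
  show "\<Union> QP = space mu" using code_Cb by (auto simp: QP_def cellb_def space_mu)
  fix p q assume "p \<in> QP" "q \<in> QP" "p \<noteq> q"
  then show "p \<inter> q = {}" by (auto simp: QP_def cellb_def)
qed

lemma join_eq: "join_iter mu QP N = cellL ` LU Cb N"
proof (intro equalityI subsetI)
  fix c assume "c \<in> join_iter mu QP N"
  then obtain p where c: "c = space mu \<inter> (\<Inter>i<N. (shift ^^ i) -` p i)" and p: "\<forall>i<N. p i \<in> QP"
    unfolding join_iter_def by blast
  from p have "\<forall>i<N. \<exists>b\<in>Cb. p i = cellb b" by (auto simp: QP_def)
  then obtain b where b: "\<And>i. i < N \<Longrightarrow> b i \<in> Cb \<and> p i = cellb (b i)" by metis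
  define t where "t = map b [0..<N]"
  have t: "t \<in> LU Cb N" using b by (auto simp: t_def LU_def)
  have "c = cellL t"
    unfolding c t_def cellL_def space_mu
    using b by (auto simp: cellb_def shift_space_plus funpow_shift)
  then show "c \<in> cellL ` LU Cb N" using t by blast
next
  fix c assume "c \<in> cellL ` LU Cb N"
  then obtain t where t: "t \<in> LU Cb N" and c: "c = cellL t" by blast
  define p where "p i = cellb (t ! i)" for i
  have ti: "t ! i \<in> Cb" if "i < N" for i using t that unfolding LU_def using nth_mem by blast
  have "\<forall>i<N. p i \<in> QP" using ti by (auto simp: p_def QP_def)
  moreover have "c = space mu \<inter> (\<Inter>i<N. (shift ^^ i) -` p i)"
    unfolding c cellL_def space_mu p_def using t
    by (auto simp: cellb_def shift_space_plus funpow_shift LU_def)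
  ultimately show "c \<in> join_iter mu QP N" unfolding join_iter_def by blast
qed

lemma HN_eq: "part_entropy mu (join_iter mu QP N) = (\<Sum>t\<in>LU Cb N. eta (measure mu (cellL t)))"
proof -
  have pe: "part_entropy mu C = (\<Sum>c\<in>C. eta (measure mu c))" for C
    unfolding part_entropy_def eta_def by simp
  have "(\<Sum>c\<in>cellL ` LU Cb N. eta (measure mu c)) = (\<Sum>t\<in>LU Cb N. eta (measure mu (cellL t)))"
  proof (subst sum.reindex_nontrivial)
    show "finite (LU Cb N)" by (simp add: finite_LU finite_Cb)
    fix x y assume xy: "x \<in> LU Cb N" "y \<in> LU Cb N" "x \<noteq> y" "cellL x = cellL y"
    have "\<exists>i<N. x ! i \<noteq> y ! i" using xy unfolding LU_def by (metis (mono_tags, lifting) mem_Collect_eq nth_equalityI)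
    then obtain i where "i < N" "x ! i \<noteq> y ! i" by blast
    then have "cellL x = {}"
    proof (intro equalityI subsetI)
      fix z assume z: "z \<in> cellL x"
      then have "z \<in> cellL y" using xy by simp
      then have "code (z i) = y ! i" using \<open>i < N\<close> xy by (auto simp: cellL_def LU_def)
      moreover have "code (z i) = x ! i" using z \<open>i < N\<close> xy by (auto simp: cellL_def LU_def)
      ultimately show "z \<in> {}" using \<open>x ! i \<noteq> y ! i\<close> by simp
    qed simp
    then show "eta (measure mu (cellL x)) = 0" by (simp add: eta_def)
  qed simp
  then show ?thesis by (simp add: join_eq pe)
qed

end


context wsetup2 begin

definition "Fr r N s = map (\<lambda>i. Phi r s i) [0..<N]"
definition "Hq = (\<Sum>u\<in>U. eta (pmf Qp u))"

lemma sumQ: "(\<Sum>u\<in>U. pmf Qp u) = 1" using finU setQ by (rule sum_pmf_eq_1)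

lemma code_Phi: "code (Phi r s i) = Phi r s i"
  using Phi0_Bs by (simp add: code_def Phi_def)

lemma cell_pre: "length t = N \<Longrightarrow> {s. Phi r s \<in> cellL t} = {s. Fr r N s = t}"
  using Phi_X by (auto simp: cellL_def code_Phi Fr_def list_eq_iff_nth_eq)

lemma sets_Fr: "{s. Fr r N s = t} \<in> sets M"
proof (cases "length t = N")
  case True then show ?thesis using cell_pre[OF True] sets_Phi_pre[OF cellL_sets] by metis
next
  case False then have "{s. Fr r N s = t} = {}" by (auto simp: Fr_def)
  then show ?thesis by simp
qed

lemma Fr_LU: "Fr r N s \<in> LU Cb N"
  using Phi0_Bs by (auto simp: Fr_def LU_def Cb_def Phi_def)

lemma cell_measure:
  assumes "t \<in> LU Cb N"
  shows "measure mu (cellL t) = (\<Sum>r<m. measure M {s. Fr r N s = t}) / m"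
proof -
  interpret M: prob_space M by (rule prob_M)
  have len: "length t = N" using assms by (simp add: LU_def)
  have "emeasure mu (cellL t) = (\<Sum>r<m. emeasure M {s. Fr r N s = t}) / m"
    using emeasure_mu[OF cellL_sets] cell_pre[OF len] by simp
  also have "\<dots> = ennreal (\<Sum>r<m. measure M {s. Fr r N s = t}) / ennreal (real m)"
    by (simp add: M.emeasure_eq_measure ennreal_of_nat_eq_real_of_nat)
  also have "\<dots> = ennreal ((\<Sum>r<m. measure M {s. Fr r N s = t}) / m)"
    using mpos by (intro divide_ennreal) (auto intro: sum_nonneg)
  finally show ?thesis by (simp add: measure_def sum_nonneg)
qed

lemma upper_r:
  assumes rm: "r < m"
  shows "(\<Sum>t\<in>LU Cb N. eta (measure M {s. Fr r N s = t})) \<le> real (N div m + 2) * Hq"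
proof -
  define J where "J = N div m + 2"
  define g where "g ws = map (\<lambda>i. ws ! ((i + r) div m) ! ((i + r) mod m)) [0..<N]" for ws :: "nat list list"
  have idx: "(i + r) div m < J" if "i < N" for i
  proof -
    have "N mod m < m" using mpos by simp
    moreover have "N div m * m + N mod m = N" by simp
    moreover have "(N div m + 2) * m = N div m * m + 2 * m" by (simp add: algebra_simps)
    ultimately have "i + r < (N div m + 2) * m" using rm that by linarith
    then show ?thesis unfolding J_def using mpos by (simp add: div_less_iff_less_mult)
  qed
  have "(\<Sum>t\<in>LU Cb N. eta (measure M {s\<in>space M. Fr r N s = t}))
      \<le> (\<Sum>ws\<in>LU U J. eta (measure M {s\<in>space M. map fixw (stake J s) = ws}))"
  proof (rule data_processing[where g=g])
    show "prob_space M" by (rule prob_M)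
    show "finite (LU U J)" "finite (LU Cb N)" by (simp_all add: finite_LU finU finite_Cb)
    show "map fixw (stake J s) \<in> LU U J" for s using fixw_U by (auto simp: LU_def)
    show "{s \<in> space M. map fixw (stake J s) = x} \<in> sets M" for x using sets_stake by (simp add: space_M)
    show "Fr r N s = g (map fixw (stake J s))" for s
      using idx by (auto simp: Fr_def g_def Phi_def Phi0_def)
  qed
  also have "\<dots> = (\<Sum>ws\<in>LU U J. eta (prodw (pmf Qp) ws))"
    by (intro sum.cong refl) (simp add: space_M prob_stake)
  also have "\<dots> = J * Hq" unfolding Hq_def using finU sumQ by (intro entropy_prodw) auto
  finally show ?thesis by (simp add: space_M J_def)
qed

lemma lower_r:
  assumes rm: "r < m"
  shows "real (N div m - 1) * Hq \<le> (\<Sum>t\<in>LU Cb N. eta (measure M {s. Fr r N s = t}))"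
proof -
  interpret M: prob_space M by (rule prob_M)
  define L where "L = N div m - 1"
  define g where "g t = map (\<lambda>j. map (\<lambda>i. t ! (Suc j * m + i - r)) [0..<m]) [0..<L]" for t :: "nat list"
  have "real L * Hq = (\<Sum>vs\<in>LU U L. eta (prodw (pmf Qp) vs))"
    unfolding Hq_def using finU sumQ by (intro entropy_prodw[symmetric]) auto
  also have "\<dots> = (\<Sum>vs\<in>LU U L. eta (measure M {s\<in>space M. map fixw (stake L (stl s)) = vs}))"
  proof (intro sum.cong refl arg_cong[where f=eta])
    fix vs assume vs: "vs \<in> LU U L"
    have "emeasure M {s. (\<lambda>s. map fixw (stake L s) = vs) (stl s)} = emeasure M {s. map fixw (stake L s) = vs}"
      by (rule emeasure_stl) (rule sets_stake)
    then have "measure M {s. map fixw (stake L (stl s)) = vs} = measure M {s. map fixw (stake L s) = vs}"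
      by (simp add: measure_def)
    then show "prodw (pmf Qp) vs = measure M {s\<in>space M. map fixw (stake L (stl s)) = vs}"
      using prob_stake[OF vs] by (simp add: space_M)
  qed
  also have "\<dots> \<le> (\<Sum>t\<in>LU Cb N. eta (measure M {s\<in>space M. Fr r N s = t}))"
  proof (rule data_processing[where g=g])
    show "prob_space M" by (rule prob_M)
    show "finite (LU U L)" "finite (LU Cb N)" by (simp_all add: finite_LU finU finite_Cb)
    show "Fr r N s \<in> LU Cb N" for s by (rule Fr_LU)
    show "{s \<in> space M. Fr r N s = x} \<in> sets M" for x using sets_Fr by (simp add: space_M)
    fix s
    show "map fixw (stake L (stl s)) = g (Fr r N s)"
    proof (rule nth_equalityI)
      show "length (map fixw (stake L (stl s))) = length (g (Fr r N s))" by (simp add: g_def)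
      fix j assume "j < length (map fixw (stake L (stl s)))"
      then have j: "j < L" by simp
      have w: "fixw (s !! Suc j) \<in> U" by (rule fixw_U)
      have "map (\<lambda>i. Fr r N s ! (Suc j * m + i - r)) [0..<m] = map (\<lambda>i. fixw (s !! Suc j) ! i) [0..<m]"
      proof (intro map_cong refl)
        fix i assume i: "i \<in> set [0..<m]"
        then have i': "i < m" by simp
        have "Suc (Suc j) * m \<le> N div m * m" using j unfolding L_def by (intro mult_right_mono) auto
        also have "\<dots> \<le> N" by simp
        finally have "Suc j * m + i < N" using i' by simp
        then have lt: "Suc j * m + i - r < N" by simp
        have ge: "r \<le> Suc j * m + i" using rm by simp
        have e: "Suc j * m + i = i + Suc j * m" by simp
        have "(i + Suc j * m) div m = Suc j + i div m" using div_mult_self2[of m i "Suc j"] mpos by (simp add: mult.commute)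
        moreover have "(i + Suc j * m) mod m = i mod m" using mod_mult_self2[of i m "Suc j"] by (simp add: mult.commute)
        ultimately have "(Suc j * m + i) div m = Suc j" "(Suc j * m + i) mod m = i"
          unfolding e using i' by simp_all
        then show "Fr r N s ! (Suc j * m + i - r) = fixw (s !! Suc j) ! i"
          using lt ge by (simp add: Fr_def Phi_def Phi0_def)
      qed
      also have "\<dots> = fixw (s !! Suc j)" using lenU[OF w] map_nth by metis
      finally show "map fixw (stake L (stl s)) ! j = g (Fr r N s) ! j" using j by (simp add: g_def)
    qed
  qed
  finally show ?thesis by (simp add: space_M L_def)
qed

end


context wsetup2 begin

definition "HN N = (\<Sum>t\<in>LU Cb N. eta (measure mu (cellL t)))"

lemma Hq_nonneg: "0 \<le> Hq"
  unfolding Hq_def by (intro sum_nonneg eta_nonneg) (auto simp: pmf_le_1)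

lemma HN_avg: "HN N = (\<Sum>t\<in>LU Cb N. eta ((\<Sum>r<m. measure M {s. Fr r N s = t}) / card {..<m}))"
  unfolding HN_def by (intro sum.cong refl) (simp add: cell_measure)

lemma HN_lower: "(real (N div m) - 1) * Hq \<le> HN N"
proof -
  have "(real (N div m) - 1) * Hq \<le> real (N div m - 1) * Hq"
    using Hq_nonneg by (intro mult_right_mono) auto
  also have "\<dots> = (\<Sum>r<m. real (N div m - 1) * Hq) / card {..<m}" using mpos by simp
  also have "\<dots> \<le> (\<Sum>r<m. \<Sum>t\<in>LU Cb N. eta (measure M {s. Fr r N s = t})) / card {..<m}"
    by (intro divide_right_mono sum_mono lower_r) auto
  also have "\<dots> = (\<Sum>t\<in>LU Cb N. (\<Sum>r<m. eta (measure M {s. Fr r N s = t})) / card {..<m})"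
    by (simp add: sum.swap[of _ "{..<m}"] sum_divide_distrib)
  also have "\<dots> \<le> HN N"
    unfolding HN_avg using mpos by (intro sum_mono eta_avg_ge) auto
  finally show ?thesis .
qed

lemma HN_upper: "HN N \<le> (real (N div m) + 2) * Hq + ln m"
proof -
  have "HN N \<le> (\<Sum>t\<in>LU Cb N. (\<Sum>r<m. eta (measure M {s. Fr r N s = t})) / card {..<m}
      + ln (card {..<m}) * (\<Sum>r<m. measure M {s. Fr r N s = t}) / card {..<m})"
    unfolding HN_avg using mpos by (intro sum_mono eta_avg_le) auto
  also have "\<dots> = (\<Sum>r<m. \<Sum>t\<in>LU Cb N. eta (measure M {s. Fr r N s = t})) / m
      + ln m * (\<Sum>r<m. \<Sum>t\<in>LU Cb N. measure M {s. Fr r N s = t}) / m"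
    by (simp add: sum.distrib sum.swap[of _ "{..<m}"] sum_divide_distrib sum_distrib_left)
  also have "\<dots> \<le> (\<Sum>r<m. real (N div m + 2) * Hq) / m + ln m * (\<Sum>r<m. 1) / m"
  proof (intro add_mono divide_right_mono mult_left_mono sum_mono upper_r)
    fix r assume "r \<in> {..<m}"
    show "(\<Sum>t\<in>LU Cb N. measure M {s. Fr r N s = t}) \<le> 1"
      using prob_sum_le1[OF prob_M, of "LU Cb N" "Fr r N"] by (simp add: space_M finite_LU finite_Cb sets_Fr)
  qed (use mpos in auto)
  also have "\<dots> = (real (N div m) + 2) * Hq + ln m" using mpos by simp
  finally show ?thesis .
qed

lemma HN_lim: "(\<lambda>n. HN (Suc n) / Suc n) \<longlonglongrightarrow> Hq / m"
proof (rule tendsto_sandwich)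
  have mp: "real m > 0" using mpos by simp
  have divb: "real N / m - 1 \<le> real (N div m)" "real (N div m) \<le> real N / m" for N
  proof -
    have "N mod m < m" using mpos by simp
    moreover have "real N = real (N div m) * m + real (N mod m)"
      by (metis div_mult_mod_eq of_nat_add of_nat_mult)
    ultimately show "real N / m - 1 \<le> real (N div m)" "real (N div m) \<le> real N / m"
      using mp by (auto simp: field_simps)
  qed
  show "\<forall>\<^sub>F n in sequentially. Hq / m - 2 * Hq / real (Suc n) \<le> HN (Suc n) / real (Suc n)"
  proof (intro always_eventually allI)
    fix n
    have "(real (Suc n) / m - 2) * Hq \<le> (real (Suc n div m) - 1) * Hq"
      using divb(1)[of "Suc n"] Hq_nonneg by (intro mult_right_mono) auto
    also have "\<dots> \<le> HN (Suc n)" by (rule HN_lower)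
    finally have "(real (Suc n) / m - 2) * Hq / real (Suc n) \<le> HN (Suc n) / real (Suc n)"
      by (intro divide_right_mono) auto
    then show "Hq / m - 2 * Hq / real (Suc n) \<le> HN (Suc n) / real (Suc n)"
      using mp by (simp add: field_simps)
  qed
  show "\<forall>\<^sub>F n in sequentially. HN (Suc n) / real (Suc n) \<le> Hq / m + (2 * Hq + ln m) / real (Suc n)"
  proof (intro always_eventually allI)
    fix n
    have "HN (Suc n) \<le> (real (Suc n div m) + 2) * Hq + ln m" by (rule HN_upper)
    also have "\<dots> \<le> (real (Suc n) / m + 2) * Hq + ln m"
      using divb(2)[of "Suc n"] Hq_nonneg by (intro add_mono mult_right_mono) auto
    finally have "HN (Suc n) / real (Suc n) \<le> ((real (Suc n) / m + 2) * Hq + ln m) / real (Suc n)"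
      by (intro divide_right_mono) auto
    then show "HN (Suc n) / real (Suc n) \<le> Hq / m + (2 * Hq + ln m) / real (Suc n)"
      using mp by (simp add: field_simps)
  qed
  have z: "(\<lambda>n. c / real (Suc n)) \<longlonglongrightarrow> 0" for c :: real
    using LIMSEQ_Suc[OF lim_const_over_n[of c]] by simp
  show "(\<lambda>n. Hq / m - 2 * Hq / real (Suc n)) \<longlonglongrightarrow> Hq / m"
    using tendsto_diff[OF tendsto_const z[of "2 * Hq"]] by simp
  show "(\<lambda>n. Hq / m + (2 * Hq + ln m) / real (Suc n)) \<longlonglongrightarrow> Hq / m"
    using tendsto_add[OF tendsto_const z[of "2 * Hq + ln m"]] by simp
qed

lemma ks_entropy_ge: "ereal (Hq / m) \<le> ks_entropy mu"
proof -
  have "ks_entropy_part mu QP = Hq / m"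
    unfolding ks_entropy_part_def using HN_lim by (simp add: HN_eq HN_def[symmetric] limI)
  then show ?thesis unfolding ks_entropy_def using fin_QP
    by (intro SUP_upper2[of QP]) auto
qed

end


lemma extend_word:
  assumes nz: "no_zero_rows_cols A" and w: "w \<noteq> []"
    and adm: "\<And>i. Suc i < length w \<Longrightarrow> A (w ! i) (w ! Suc i)"
  shows "\<exists>x\<in>shift_space A. \<forall>i<length w. x i = w ! i"
proof -
  define sc where "sc b = (SOME c. A b c)" for b
  have ex: "\<exists>c. A b c" for b using nz unfolding no_zero_rows_cols_def by blast
  have sc: "A b (sc b)" for b unfolding sc_def using ex[of b] by (rule someI_ex)
  define L where "L = length w"
  have L: "L > 0" using w by (simp add: L_def)
  define x where "x i = (if i < L then w ! i else (sc ^^ (i - L + 1)) (w ! (L - 1)))" for i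
  have "A (x i) (x (Suc i))" for i
  proof -
    consider "Suc i < L" | "Suc i = L" | "Suc i > L" by linarith
    then show ?thesis
    proof cases
      case 1
      then have "x i = w ! i" "x (Suc i) = w ! Suc i" by (simp_all add: x_def)
      then show ?thesis using adm 1 by (simp add: L_def)
    next
      case 2
      then have i: "i = L - 1" by simp
      then have "x i = w ! (L - 1)" "x (Suc i) = sc (w ! (L - 1))" using 2 by (simp_all add: x_def)
      then show ?thesis using sc by simp
    next
      case 3
      then have e: "Suc i - L + 1 = Suc (i - L + 1)" by simp
      have "x (Suc i) = (sc ^^ (Suc i - L + 1)) (w ! (L - 1))" using 3 by (simp add: x_def)
      also have "\<dots> = sc ((sc ^^ (i - L + 1)) (w ! (L - 1)))" by (simp only: e funpow.simps comp_def)
      finally have "x (Suc i) = sc (x i)" using 3 by (simp add: x_def)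
      then show ?thesis using sc by simp
    qed
  qed
  then have "x \<in> shift_space A" by (simp add: shift_space_def)
  moreover have "\<forall>i<length w. x i = w ! i" by (simp add: x_def L_def)
  ultimately show ?thesis by blast
qed

lemma cyl_map_eq: "x \<in> cyl A u \<Longrightarrow> map x [0..<length u] = u"
  unfolding cyl_def by (intro nth_equalityI) auto

lemma gibbs_bounds:
  assumes g: "gibbs_state A \<phi> \<mu> c0 P" and c0: "c0 \<ge> 1" and x: "x \<in> shift_space A" and k: "k \<ge> 1"
  shows "exp (- P * real k + birkhoff k \<phi> x) / c0 \<le> measure \<mu> (cyl A (map x [0..<k]))"
    "measure \<mu> (cyl A (map x [0..<k])) \<le> c0 * exp (- P * real k + birkhoff k \<phi> x)"
proof -
  define e where "e = exp (- P * real k + birkhoff k \<phi> x)"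
  define a where "a = measure \<mu> (cyl A (map x [0..<k]))"
  have e: "e > 0" by (simp add: e_def)
  have all: "\<forall>n\<ge>1. \<forall>x\<in>shift_space A. inverse c0 \<le> measure \<mu> (cyl A (map x [0..<n])) / exp (- P * real n + birkhoff n \<phi> x) \<and>
        measure \<mu> (cyl A (map x [0..<n])) / exp (- P * real n + birkhoff n \<phi> x) \<le> c0"
    using g unfolding gibbs_state_def by blast
  have b: "inverse c0 \<le> a / e \<and> a / e \<le> c0" using all[rule_format, OF k x] unfolding a_def e_def .
  have c: "c0 > 0" using c0 by simp
  have "inverse c0 * e \<le> a" using b e by (simp add: pos_le_divide_eq)
  then show "exp (- P * real k + birkhoff k \<phi> x) / c0 \<le> measure \<mu> (cyl A (map x [0..<k]))"
    unfolding a_def[symmetric] e_def[symmetric] by (simp add: divide_inverse_commute)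
  have "a \<le> c0 * e" using b e by (simp add: pos_divide_le_eq mult.commute)
  then show "measure \<mu> (cyl A (map x [0..<k])) \<le> c0 * exp (- P * real k + birkhoff k \<phi> x)"
    unfolding a_def[symmetric] e_def[symmetric] .
qed

lemma cyl_sets:
  "cyl A w \<in> sets (borelX A)"
proof -
  have "cyl A w = shift_space A \<inter> (\<Inter>i\<in>{..<length w}. {x. x i = w ! i})" by (auto simp: cyl_def)
  also have "\<dots> = shift_space A \<inter> {x. \<forall>i<length w. x i = w ! i}" by auto
  also have "\<dots> \<in> sets (borelX A)"
  proof -
    have "{x::nat \<Rightarrow> nat. \<forall>i<length w. x i = w ! i} \<in> sets borel"
    proof (cases "length w = 0")
      case True then show ?thesis by simp
    next
      case False
      have hi: "\<And>i. (\<lambda>x::nat\<Rightarrow>nat. x i) -` {w ! i} \<inter> space borel \<in> sets borel"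
      proof -
        fix i
        have "{w ! i} \<in> sets (borel::nat measure)" by (simp add: sets_borel_eq_count_space)
        from measurable_sets[OF meas_coord_borel this] show "(\<lambda>x::nat\<Rightarrow>nat. x i) -` {w ! i} \<inter> space borel \<in> sets borel" by simp
      qed
      have "{x::nat \<Rightarrow> nat. \<forall>i<length w. x i = w ! i} = (\<Inter>i\<in>{..<length w}. (\<lambda>x. x i) -` {w ! i} \<inter> space borel)"
        using False by auto
      also have "\<dots> \<in> sets borel" using hi False by (intro sets.finite_INT) auto
      finally show ?thesis .
    qed
    then show ?thesis unfolding borelX_def sets_restrict_space
      by (intro image_eqI[where x="{x. \<forall>i<length w. x i = w ! i}"]) auto
  qed
  finally show ?thesis .
qed



lemma ln_le_iff_le_exp: "0 < (a::real) \<Longrightarrow> ln a \<le> b \<longleftrightarrow> a \<le> exp b"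
  using ln_le_cancel_iff[of a "exp b"] by simp

lemma main_step:
  fixes A :: "nat \<Rightarrow> nat \<Rightarrow> bool"
    and \<phi> :: "(nat \<Rightarrow> nat) \<Rightarrow> real"
    and \<mu>\<phi> :: "(nat \<Rightarrow> nat) measure"
    and c0 P :: real
    and l :: nat
    and \<psi> :: "nat \<Rightarrow> (nat \<Rightarrow> nat) \<Rightarrow> real"
    and \<alpha> :: "nat \<Rightarrow> real"
  assumes nz: "no_zero_rows_cols A"
    and phim: "\<phi> \<in> borel_measurable (borelX A)"
    and c0: "c0 \<ge> 1"
    and gibbs: "gibbs_state A \<phi> \<mu>\<phi> c0 P"
    and cont: "\<forall>j\<in>{1..l}. continuous_on (shift_space A) (\<psi> j)"
    and n: "n \<ge> 2"
    and Gfin: "finite G" and Gne: "G \<noteq> {}" and GE: "G \<subseteq> adm_words_ab A n a a"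
    and INFc: "\<forall>j\<in>{1..l}. (INF x\<in>cylset A G. ereal (birkhoff (n - 1) (\<psi> j) x)) > ereal (\<alpha> j * real (n - 1))"
  shows "\<exists>\<mu>. shift_invariant A \<mu> \<and>
            (\<exists>K. compact K \<and> K \<subseteq> shift_space A \<and> emeasure \<mu> K = 1) \<and>
            ereal (ln (measure \<mu>\<phi> (cylset A G)))
              \<le> free_energy A \<phi> P \<mu> * ereal (real (n - 1)) + ereal (ln c0) \<and>
            (\<forall>j\<in>{1..l}. integral\<^sup>L \<mu> (\<psi> j) > \<alpha> j)"
proof -
  define m where "m = n - 1"
  have m1: "m \<ge> 1" and nm: "n = Suc m" using n by (auto simp: m_def)
  have Gw: "length w = n" "w ! 0 = a" "w ! (n - 1) = a" "\<And>i. Suc i < n \<Longrightarrow> A (w ! i) (w ! Suc i)"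
    if "w \<in> G" for w
    using GE that by (auto simp: adm_words_ab_def adm_words_def)
  have Gsplit: "w = take m w @ [a]" if "w \<in> G" for w
  proof -
    have l: "length w = Suc m" using Gw(1)[OF that] nm by simp
    have "w = take (Suc m) w" using l by simp
    also have "\<dots> = take m w @ [w ! m]" by (rule take_Suc_conv_app_nth) (simp add: l)
    also have "w ! m = a" using Gw(3)[OF that] nm by simp
    finally show ?thesis .
  qed
  define U where "U = (\<lambda>w. take m w) ` G"
  have finU: "finite U" and Une: "U \<noteq> {}" using Gfin Gne by (auto simp: U_def)
  have UG: "u @ [a] \<in> G" if "u \<in> U" for u
    using that Gsplit by (auto simp: U_def)
  have lenU: "length u = m" if "u \<in> U" for u
    using that Gw nm by (auto simp: U_def)
  have startU: "u ! 0 = a" if "u \<in> U" for u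
    using UG[OF that] Gw[OF UG[OF that]] lenU[OF that] m1 by (simp add: nth_append)
  have admU: "A (u ! i) (u ! Suc i)" if "u \<in> U" "Suc i < m" for u i
    using Gw(4)[OF UG[OF that(1)], of i] lenU[OF that(1)] that(2) nm by (simp add: nth_append)
  have endU: "A (u ! (m - 1)) a" if "u \<in> U" for u
    using Gw(4)[OF UG[OF that], of "m - 1"] lenU[OF that] m1 nm by (simp add: nth_append)
  have probphi: "prob_space \<mu>\<phi>" and setsphi: "sets \<mu>\<phi> = sets (borelX A)"
    using gibbs by (auto simp: gibbs_state_def prob_on_X_def)
  interpret PH: prob_space \<mu>\<phi> by (rule probphi)
  define S where "S x = birkhoff m \<phi> x" for x
  have cylne: "\<exists>x. x \<in> cyl A u" if "u \<in> U" for u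
  proof -
    have "u \<noteq> []" using lenU[OF that] m1 by auto
    from extend_word[OF nz this admU[OF that]] lenU[OF that] obtain x where
      "x \<in> shift_space A" "\<forall>i<length u. x i = u ! i" by auto
    then show ?thesis by (auto simp: cyl_def)
  qed
  have gb: "exp (- P * real m + S x) / c0 \<le> measure \<mu>\<phi> (cyl A u)"
     "measure \<mu>\<phi> (cyl A u) \<le> c0 * exp (- P * real m + S x)"
    if "u \<in> U" "x \<in> cyl A u" for u x
  proof -
    have xX: "x \<in> shift_space A" using that by (simp add: cyl_def)
    have mp: "map x [0..<m] = u" using cyl_map_eq[OF that(2)] lenU[OF that(1)] by simp
    show "exp (- P * real m + S x) / c0 \<le> measure \<mu>\<phi> (cyl A u)"
      "measure \<mu>\<phi> (cyl A u) \<le> c0 * exp (- P * real m + S x)"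
      using gibbs_bounds[OF gibbs c0 xX m1] unfolding mp S_def by auto
  qed
  have cpos: "measure \<mu>\<phi> (cyl A u) > 0" if uU: "u \<in> U" for u
  proof -
    obtain x where x: "x \<in> cyl A u" using cylne[OF uU] by blast
    have "0 < exp (- P * real m + S x) / c0" using c0 by simp
    also have "\<dots> \<le> measure \<mu>\<phi> (cyl A u)" by (rule gb(1)[OF uU x])
    finally show ?thesis .
  qed
  have Slow: "ln (measure \<mu>\<phi> (cyl A u) / c0) + P * real m \<le> S x" if "u \<in> U" "x \<in> cyl A u" for u x
  proof -
    have "measure \<mu>\<phi> (cyl A u) / c0 \<le> exp (- P * real m + S x)"
      using gb(2)[OF that] c0 by (simp add: pos_divide_le_eq mult.commute)
    then have "ln (measure \<mu>\<phi> (cyl A u) / c0) \<le> - P * real m + S x"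
      using cpos[OF that(1)] c0 by (subst ln_le_iff_le_exp) auto
    then show ?thesis by simp
  qed
  have bdd: "bdd_below (S ` cyl A u)" if "u \<in> U" for u
    using Slow[OF that] by (intro bdd_belowI2) 
  define tu where "tu u = - P * real m + Inf (S ` cyl A u)" for u
  have tu_le: "tu u + P * real m \<le> S x" if "u \<in> U" "x \<in> cyl A u" for u x
    unfolding tu_def using cInf_lower[OF imageI[OF that(2)] bdd[OF that(1)]] by simp
  have cyl_le: "measure \<mu>\<phi> (cyl A u) \<le> c0 * exp (tu u)" if "u \<in> U" for u
  proof -
    have "ln (measure \<mu>\<phi> (cyl A u) / c0) + P * real m \<le> Inf (S ` cyl A u)"
      using cylne[OF that] Slow[OF that] by (intro cInf_greatest) auto
    then have "ln (measure \<mu>\<phi> (cyl A u) / c0) \<le> tu u" unfolding tu_def by simp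
    then have "measure \<mu>\<phi> (cyl A u) / c0 \<le> exp (tu u)"
      using cpos[OF that] c0 by (subst (asm) ln_le_iff_le_exp) auto
    then show ?thesis using c0 by (simp add: pos_divide_le_eq mult.commute)
  qed
  define Z where "Z = (\<Sum>u\<in>U. exp (tu u))"
  have Zpos: "Z > 0" unfolding Z_def using finU Une by (intro sum_pos) auto
  define qf where "qf u = (if u \<in> U then exp (tu u) / Z else 0)" for u
  have qf_nonneg: "\<And>u. 0 \<le> qf u" using Zpos by (simp add: qf_def)
  have qf_sum: "(\<Sum>u\<in>U. qf u) = 1" using Zpos by (simp add: qf_def Z_def sum_divide_distrib[symmetric])
  have qf_int: "(\<integral>\<^sup>+x. ennreal (qf x) \<partial>count_space UNIV) = 1"
  proof -
    have "(\<integral>\<^sup>+x. ennreal (qf x) \<partial>count_space UNIV) = (\<Sum>x\<in>U. ennreal (qf x))"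
      using finU by (intro nn_integral_count_space') (auto simp: qf_def)
    also have "\<dots> = 1" using qf_sum qf_nonneg by simp
    finally show ?thesis .
  qed
  define Qp where "Qp = embed_pmf qf"
  have pmfQ: "pmf Qp u = qf u" for u unfolding Qp_def by (rule pmf_embed_pmf[OF qf_nonneg qf_int])
  have setQ: "set_pmf Qp \<subseteq> U" by (auto simp: set_pmf_eq pmfQ qf_def)
  obtain u0 where u0: "u0 \<in> U" using Une by blast
  interpret W: wsetup2 U Qp u0 m A a
    by unfold_locales (use finU u0 setQ m1 lenU startU admU endU in auto)
  have fixU: "W.fixw u \<in> U" for u by (rule W.fixw_U)
  have Phi0_cyl: "W.Phi0 s \<in> cyl A (W.fixw (shd s))" for s
  proof -
    have "W.Phi0 s i = W.fixw (shd s) ! i" if "i < m" for i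
      using that by (simp add: W.Phi0_def)
    then show ?thesis using W.Phi0_X lenU[OF fixU] by (simp add: cyl_def)
  qed
  have Phi0_G: "W.Phi0 s \<in> cylset A G" for s
  proof -
    let ?u = "W.fixw (shd s)"
    have "W.Phi0 s i = (?u @ [a]) ! i" if "i < length (?u @ [a])" for i
    proof (cases "i < m")
      case True then show ?thesis using lenU[OF fixU] by (simp add: W.Phi0_def nth_append)
    next
      case False
      then have "i = m" using that lenU[OF fixU] by simp
      then show ?thesis using lenU[OF fixU] startU[OF fixU] m1 by (simp add: W.Phi0_def nth_append)
    qed
    then have "W.Phi0 s \<in> cyl A (?u @ [a])" using W.Phi0_X by (simp add: cyl_def)
    then show ?thesis using UG[OF fixU] by (auto simp: cylset_def)
  qed
  interpret M: prob_space W.M by (rule W.prob_M)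
  have KX: "W.K \<subseteq> shift_space A" by (auto simp: W.K_def)
  have psi_ok: "integral\<^sup>L W.mu (\<psi> j) > \<alpha> j" if j: "j \<in> {1..l}" for j
  proof -
    have contj: "continuous_on (shift_space A) (\<psi> j)" using cont j by auto
    have meas: "\<psi> j \<in> borel_measurable (borelX A)"
      unfolding borelX_def by (rule borel_measurable_continuous_on_restrict[OF contj])
    have "compact (\<psi> j ` W.K)"
      by (rule compact_continuous_image[OF continuous_on_subset[OF contj KX] W.compact_K])
    then have "bounded (\<psi> j ` W.K)" by (rule compact_imp_bounded)
    then obtain B where B: "\<And>x. x \<in> W.K \<Longrightarrow> \<bar>\<psi> j x\<bar> \<le> B" by (auto simp: bounded_real)
    define V where "V = (INF x\<in>cylset A G. ereal (birkhoff (n - 1) (\<psi> j) x))"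
    have V1: "V > ereal (\<alpha> j * real m)" using INFc j unfolding V_def m_def by auto
    have V2: "V \<le> ereal (birkhoff m (\<psi> j) (W.Phi0 s))" for s
      unfolding V_def m_def using Phi0_G[of s] by (intro INF_lower2) (auto simp: m_def)
    obtain I where I: "V = ereal I"
      using V1 V2[of undefined] by (cases V) auto
    have I1: "I > \<alpha> j * real m" using V1 I by simp
    have I2: "I \<le> birkhoff m (\<psi> j) (W.Phi0 s)" for s using V2[of s] I by simp
    have "I \<le> (\<integral>s. birkhoff m (\<psi> j) (W.Phi0 s) \<partial>W.M)"
      by (intro M.integral_ge_const W.integrable_M_birkhoff[OF meas B]) (auto simp: I2)
    then have "I / m \<le> integral\<^sup>L W.mu (\<psi> j)"
      using W.integral_mu(2)[OF meas B] m1 by (simp add: divide_right_mono)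
    moreover have "\<alpha> j < I / m" using I1 m1 by (simp add: field_simps)
    ultimately show ?thesis by simp
  qed
  define mu0 where "mu0 b = measure \<mu>\<phi> (cyl A [b])" for b
  have phi_bd1: "exp (- P + \<phi> x) / c0 \<le> mu0 (x 0)" "mu0 (x 0) \<le> c0 * exp (- P + \<phi> x)"
    if "x \<in> shift_space A" for x
  proof -
    have b1: "birkhoff 1 \<phi> x = \<phi> x" by (simp add: birkhoff_def)
    have mp: "map x [0..<1] = [x 0]" by simp
    show "exp (- P + \<phi> x) / c0 \<le> mu0 (x 0)" "mu0 (x 0) \<le> c0 * exp (- P + \<phi> x)"
      using gibbs_bounds[OF gibbs c0 that, of 1] unfolding b1 mp mu0_def by auto
  qed
  have phi_up: "\<phi> x \<le> P + ln c0" if "x \<in> shift_space A" for x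
  proof -
    have "exp (- P + \<phi> x) / c0 \<le> 1" using phi_bd1(1)[OF that] PH.prob_le_1[of "cyl A [x 0]"]
      unfolding mu0_def by linarith
    then have "exp (- P + \<phi> x) \<le> c0" using c0 by (simp add: pos_divide_le_eq)
    then have "- P + \<phi> x \<le> ln c0" using c0 by (subst ln_ge_iff) auto
    then show ?thesis by simp
  qed
  have mu0pos: "mu0 (x 0) > 0" if "x \<in> shift_space A" for x
  proof -
    have "0 < exp (- P + \<phi> x) / c0" using c0 by simp
    then show ?thesis using phi_bd1(1)[OF that] by linarith
  qed
  have phi_low: "ln (mu0 (x 0) / c0) + P \<le> \<phi> x" if "x \<in> shift_space A" for x
  proof -
    have "mu0 (x 0) / c0 \<le> exp (- P + \<phi> x)" using phi_bd1(2)[OF that] c0 by (simp add: pos_divide_le_eq mult.commute)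
    then have "ln (mu0 (x 0) / c0) \<le> - P + \<phi> x" using mu0pos[OF that] c0 by (subst ln_le_iff_le_exp) auto
    then show ?thesis by simp
  qed
  define Bphi where "Bphi = \<bar>P + ln c0\<bar> + (\<Sum>b\<in>W.Bs. \<bar>ln (mu0 b / c0) + P\<bar>)"
  have Bphi: "\<bar>\<phi> x\<bar> \<le> Bphi" if "x \<in> W.K" for x
  proof -
    have xX: "x \<in> shift_space A" and x0: "x 0 \<in> W.Bs" using that by (auto simp: W.K_def)
    have "\<bar>ln (mu0 (x 0) / c0) + P\<bar> \<le> (\<Sum>b\<in>W.Bs. \<bar>ln (mu0 b / c0) + P\<bar>)"
      using x0 W.finite_Bs by (intro member_le_sum) auto
    then show ?thesis using phi_up[OF xX] phi_low[OF xX] unfolding Bphi_def by linarith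
  qed
  have phi_int: "(\<Sum>u\<in>U. qf u * tu u) + P * real m \<le> real m * integral\<^sup>L W.mu \<phi>"
  proof -
    have "(\<Sum>u\<in>U. qf u * tu u) + P * real m = (\<Sum>u\<in>U. (tu u + P * real m) * pmf Qp u)"
      using qf_sum by (simp add: pmfQ algebra_simps sum.distrib sum_distrib_left[symmetric])
    also have "\<dots> = (\<integral>s. tu (W.fixw (shd s)) + P * real m \<partial>W.M)"
      by (rule W.integral_shd[symmetric])
    also have "\<dots> \<le> (\<integral>s. birkhoff m \<phi> (W.Phi0 s) \<partial>W.M)"
      using tu_le[OF fixU Phi0_cyl] unfolding S_def
      by (intro integral_mono W.integrable_shd W.integrable_M_birkhoff[OF phim Bphi]) auto
    also have "\<dots> = real m * integral\<^sup>L W.mu \<phi>"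
      using W.integral_mu(2)[OF phim Bphi] m1 by simp
    finally show ?thesis .
  qed
  have lnZ: "ln Z = W.Hq + (\<Sum>u\<in>U. qf u * tu u)"
  proof -
    have e: "eta (pmf Qp u) = qf u * ln Z - qf u * tu u" if "u \<in> U" for u
    proof -
      have "qf u = exp (tu u) / Z" using that by (simp add: qf_def)
      moreover have "exp (tu u) / Z > 0" using Zpos by simp
      ultimately show ?thesis using Zpos by (simp add: pmfQ eta_def ln_div algebra_simps) (simp add: field_simps)
    qed
    have "W.Hq = (\<Sum>u\<in>U. qf u * ln Z - qf u * tu u)" unfolding W.Hq_def by (intro sum.cong refl e)
    also have "\<dots> = ln Z - (\<Sum>u\<in>U. qf u * tu u)"
      using qf_sum by (simp add: sum_subtractf sum_distrib_right[symmetric])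
    finally show ?thesis by simp
  qed
  have Gsub: "cylset A G \<subseteq> (\<Union>u\<in>U. cyl A u)"
  proof
    fix x assume "x \<in> cylset A G"
    then obtain w where w: "w \<in> G" "x \<in> cyl A w" by (auto simp: cylset_def)
    have "x \<in> cyl A (take m w)" using w by (auto simp: cyl_def)
    then show "x \<in> (\<Union>u\<in>U. cyl A u)" using w(1) by (auto simp: U_def)
  qed
  have cylsets: "cyl A w \<in> sets \<mu>\<phi>" for w using cyl_sets setsphi by simp
  have Gsets: "cylset A G \<in> sets \<mu>\<phi>" unfolding cylset_def using Gfin cylsets by auto
  have Gle: "measure \<mu>\<phi> (cylset A G) \<le> c0 * Z"
  proof -
    have "measure \<mu>\<phi> (cylset A G) \<le> measure \<mu>\<phi> (\<Union>u\<in>U. cyl A u)"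
      using Gsub finU cylsets by (intro PH.finite_measure_mono) auto
    also have "\<dots> \<le> (\<Sum>u\<in>U. measure \<mu>\<phi> (cyl A u))"
      using finU cylsets by (intro PH.finite_measure_subadditive_finite) auto
    also have "\<dots> \<le> (\<Sum>u\<in>U. c0 * exp (tu u))" by (intro sum_mono cyl_le)
    also have "\<dots> = c0 * Z" by (simp add: Z_def sum_distrib_left)
    finally show ?thesis .
  qed
  have Gpos: "measure \<mu>\<phi> (cylset A G) > 0"
  proof -
    obtain u where u: "u \<in> U" using Une by blast
    obtain x where x: "x \<in> cyl A (u @ [a])"
    proof -
      have "u @ [a] \<noteq> []" by simp
      from extend_word[OF nz this Gw(4)[OF UG[OF u]]] Gw(1)[OF UG[OF u]]
      obtain x where "x \<in> shift_space A" "\<forall>i<length (u @ [a]). x i = (u @ [a]) ! i" by auto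
      then show ?thesis using that by (auto simp: cyl_def)
    qed
    have xX: "x \<in> shift_space A" using x by (simp add: cyl_def)
    have len: "length (u @ [a]) = n" using Gw(1)[OF UG[OF u]] .
    have "0 < exp (- P * real n + birkhoff n \<phi> x) / c0" using c0 by simp
    also have "\<dots> \<le> measure \<mu>\<phi> (cyl A (map x [0..<n]))"
      by (rule gibbs_bounds(1)[OF gibbs c0 xX]) (use n in simp)
    also have "map x [0..<n] = u @ [a]" using cyl_map_eq[OF x] len by (metis)
    also have "measure \<mu>\<phi> (cyl A (u @ [a])) \<le> measure \<mu>\<phi> (cylset A G)"
      using UG[OF u] Gsets by (intro PH.finite_measure_mono) (auto simp: cylset_def)
    finally show ?thesis .
  qed
  have lnG: "ln (measure \<mu>\<phi> (cylset A G)) \<le> ln c0 + W.Hq + (\<Sum>u\<in>U. qf u * tu u)"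
  proof -
    have "ln (measure \<mu>\<phi> (cylset A G)) \<le> ln (c0 * Z)" using Gle Gpos by simp
    also have "\<dots> = ln c0 + ln Z" using c0 Zpos by (simp add: ln_mult)
    finally show ?thesis using lnZ by simp
  qed
  have phimu: "\<phi> \<in> borel_measurable W.mu" using phim by (simp add: measurable_cong_sets[OF W.sets_mu refl])
  have intphi: "integrable W.mu \<phi>" by (rule W.integral_mu(1)[OF phim Bphi])
  have inM: "W.mu \<in> M_phi A \<phi>"
    unfolding M_phi_def
  proof (intro CollectI conjI W.mu_invariant phimu)
    have "(\<integral>\<^sup>+ x. ennreal (- \<phi> x) \<partial>W.mu) \<le> (\<integral>\<^sup>+ x. ennreal (norm (\<phi> x)) \<partial>W.mu)"
      by (intro nn_integral_mono) (simp add: ennreal_leI)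
    also have "\<dots> < \<infinity>" using intphi by (simp add: integrable_iff_bounded)
    finally show "(\<integral>\<^sup>+ x. ennreal (- \<phi> x) \<partial>W.mu) < \<infinity>" .
  qed
  define E where "E = - P + W.Hq / m + integral\<^sup>L W.mu \<phi>"
  have FE: "ereal E \<le> free_energy A \<phi> P W.mu"
  proof -
    have "ereal E = ereal (- P) + ereal (W.Hq / m) + ereal (integral\<^sup>L W.mu \<phi>)" by (simp add: E_def)
    also have "\<dots> \<le> ereal (- P) + ks_entropy W.mu + ereal (integral\<^sup>L W.mu \<phi>)"
      by (intro add_mono order_refl W.ks_entropy_ge)
    also have "\<dots> = free_energy A \<phi> P W.mu" using inM by (simp add: free_energy_def)
    finally show ?thesis .
  qed
  have mpos: "real m > 0" using m1 by simp
  have key: "ln (measure \<mu>\<phi> (cylset A G)) \<le> E * real m + ln c0"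
  proof -
    have "E * real m = - P * real m + W.Hq + real m * integral\<^sup>L W.mu \<phi>"
      using mpos by (simp add: E_def field_simps)
    then show ?thesis using lnG phi_int by linarith
  qed
  have final: "ereal (ln (measure \<mu>\<phi> (cylset A G))) \<le> free_energy A \<phi> P W.mu * ereal (real (n - 1)) + ereal (ln c0)"
  proof -
    have "ereal (ln (measure \<mu>\<phi> (cylset A G))) \<le> ereal E * ereal (real m) + ereal (ln c0)"
      using key by simp
    also have "\<dots> \<le> free_energy A \<phi> P W.mu * ereal (real m) + ereal (ln c0)"
      by (intro add_mono order_refl ereal_mult_right_mono FE) simp
    finally show ?thesis by (simp add: m_def)
  qed
  show ?thesis
    using W.mu_invariant W.compact_K KX W.mu_K final psi_ok by blast
qed

theorem lemma4p3:
  fixes A :: "nat \<Rightarrow> nat \<Rightarrow> bool"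
    and \<phi> :: "(nat \<Rightarrow> nat) \<Rightarrow> real"
    and \<mu>\<phi> :: "(nat \<Rightarrow> nat) measure"
    and c0 P :: real
    and l :: nat
    and \<psi> :: "nat \<Rightarrow> (nat \<Rightarrow> nat) \<Rightarrow> real"
    and \<alpha> :: "nat \<Rightarrow> real"
  assumes "no_zero_rows_cols A"
    and "\<phi> \<in> borel_measurable (borelX A)"
    and "c0 \<ge> 1"
    and "gibbs_state A \<phi> \<mu>\<phi> c0 P"
    and "l \<ge> 1"
    and "\<forall>j\<in>{1..l}. continuous_on (shift_space A) (\<psi> j)"
  shows "\<exists>n1::nat. n1 > 1 \<and>
    (\<forall>n\<ge>n1. \<forall>a::nat. \<forall>G. finite G \<and> G \<noteq> {} \<and> G \<subseteq> adm_words_ab A n a a \<and>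
       (\<forall>j\<in>{1..l}. (INF x\<in>cylset A G. ereal (birkhoff (n - 1) (\<psi> j) x)) > ereal (\<alpha> j * real (n - 1)))
     \<longrightarrow> (\<exists>\<mu>. shift_invariant A \<mu> \<and>
            (\<exists>K. compact K \<and> K \<subseteq> shift_space A \<and> emeasure \<mu> K = 1) \<and>
            ereal (ln (measure \<mu>\<phi> (cylset A G)))
              \<le> free_energy A \<phi> P \<mu> * ereal (real (n - 1)) + ereal (ln c0) \<and>
            (\<forall>j\<in>{1..l}. integral\<^sup>L \<mu> (\<psi> j) > \<alpha> j)))"
proof -
  show ?thesis
  proof (intro exI[of _ "2::nat"] conjI allI impI)
    show "(2::nat) > 1" by simp
    fix n :: nat and a :: nat and G
    assume n: "n \<ge> 2"
    assume H: "finite G \<and> G \<noteq> {} \<and> G \<subseteq> adm_words_ab A n a a \<and>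
       (\<forall>j\<in>{1..l}. (INF x\<in>cylset A G. ereal (birkhoff (n - 1) (\<psi> j) x)) > ereal (\<alpha> j * real (n - 1)))"
    show "\<exists>\<mu>. shift_invariant A \<mu> \<and>
            (\<exists>K. compact K \<and> K \<subseteq> shift_space A \<and> emeasure \<mu> K = 1) \<and>
            ereal (ln (measure \<mu>\<phi> (cylset A G)))
              \<le> free_energy A \<phi> P \<mu> * ereal (real (n - 1)) + ereal (ln c0) \<and>
            (\<forall>j\<in>{1..l}. integral\<^sup>L \<mu> (\<psi> j) > \<alpha> j)"
      using H by (intro main_step[OF assms(1,2,3,4,6) n]) auto
  qed
qed


end
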